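(* Fix $C\neq1$ and fix $\epsilon\in(0,1)$ and $\omega>0$ such that $\delta_0=\delta(C)-C\epsilon-\omega>0$ (note $\delta_2=\delta(C)-\log(1-\epsilon)+\omega>0$ automatically). There is a positive constant $N$ such that for all $n\ge N$, all $1\le i\le n$ and all integers $1\le r\le\epsilon n$, \[ \mathbb{P}(\#\mathcal{E}_i=r)\le\frac{T_re^{-r}}{C(r-1)!}e^{-\delta_0 r} \] and \[ \mathbb{P}(\#\mathcal{E}_i=r)\ge\frac{1}{C(1-\epsilon)}\frac{T_re^{-r}}{(r-1)!}e^{-\delta_2 r}e^{-2\epsilon+\frac{2\omega}{3}}. \]
   Context: Let $C>0$ be a constant and $(\alpha_n)_{n\ge1}$ a sequence of nonnegative reals with $\alpha_n\to0$. For each $n$, consider the complete graph $K_n$ on vertex set $\{1,\dots,n\}$; each edge $e$ of $K_n$ is independently open with probability $p_n(e)$ and closed otherwise, where $\frac{C-\alpha_n}{n}\le p_n(e)\le\frac{C+\alpha_n}{n}$ for every edge $e$. Let $G$ be the resulting random graph of open edges, with probability measure $\mathbb{P}$. For a vertex $i$, $\mathcal{E}_i$ denotes the open component of $G$ containing $i$ (the set of vertices joined to $i$ by a path of open edges, together with $i$ itself), and $\#\mathcal{E}_i$ its number of vertices. $\delta(C)=C-1-\log C$. $T_1=1$ and for $r\ge2$, $T_r$ is the number of labelled trees on $r$ vertices. *)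

theory Defs
  imports "HOL-Analysis.Analysis"
begin

definition complete_edges :: "nat set \<Rightarrow> nat set set" where
  "complete_edges V = {{u, v} | u v. u \<in> V \<and> v \<in> V \<and> u \<noteq> v}"

definition Kn_edges :: "nat \<Rightarrow> nat set set" where
  "Kn_edges n = complete_edges {1..n}"

definition adj :: "nat set set \<Rightarrow> (nat \<times> nat) set" where
  "adj G = {(u, v). {u, v} \<in> G}"

definition component :: "nat set set \<Rightarrow> nat \<Rightarrow> nat set" where
  "component G i = {j. (i, j) \<in> (adj G)\<^sup>*}"

text \<open>Probability of an event A (a predicate on open edge sets) in the random graph
  on K_n whose edges are independently open with probabilities p n e.\<close>
definition rg_prob :: "(nat \<Rightarrow> nat set \<Rightarrow> real) \<Rightarrow> nat \<Rightarrow> (nat set set \<Rightarrow> bool) \<Rightarrow> real" where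
  "rg_prob p n A = (\<Sum>G\<in>{G. G \<subseteq> Kn_edges n \<and> A G}.
      (\<Prod>e\<in>G. p n e) * (\<Prod>e\<in>Kn_edges n - G. 1 - p n e))"

definition connected_on :: "nat set \<Rightarrow> nat set set \<Rightarrow> bool" where
  "connected_on V F \<longleftrightarrow> (\<forall>u\<in>V. \<forall>v\<in>V. (u, v) \<in> (adj F)\<^sup>*)"

definition acyclic_graph :: "nat set set \<Rightarrow> bool" where
  "acyclic_graph F \<longleftrightarrow> \<not> (\<exists>u v. {u, v} \<in> F \<and> u \<noteq> v \<and> (u, v) \<in> (adj (F - {{u, v}}))\<^sup>*)"

definition is_tree_on :: "nat set \<Rightarrow> nat set set \<Rightarrow> bool" where
  "is_tree_on V F \<longleftrightarrow> F \<subseteq> complete_edges V \<and> connected_on V F \<and> acyclic_graph F"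

definition T :: "nat \<Rightarrow> nat" where
  "T r = card {F. is_tree_on {1..r} F}"

definition delta :: "real \<Rightarrow> real" where
  "delta C = C - 1 - ln C"

end

theory Submission
  imports Defs
begin


lemma adj_sym: "(u,v) \<in> adj G \<Longrightarrow> (v,u) \<in> adj G"
  by (simp add: adj_def insert_commute)

lemma sym_adj: "sym (adj G)"
  by (auto simp: sym_def intro: adj_sym)

lemma rtr_sym: "(u,v) \<in> (adj G)\<^sup>* \<Longrightarrow> (v,u) \<in> (adj G)\<^sup>*"
  using sym_rtrancl[OF sym_adj[of G]] by (auto simp: sym_def)

lemma adj_mono: "F \<subseteq> G \<Longrightarrow> adj F \<subseteq> adj G"
  by (auto simp: adj_def)

lemma rtr_mono: "F \<subseteq> G \<Longrightarrow> (adj F)\<^sup>* \<subseteq> (adj G)\<^sup>*"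
  using rtrancl_mono adj_mono by blast

lemma adj_insert: "adj (insert {u,v} F) = insert (u,v) (insert (v,u) (adj F))"
  by (auto simp: adj_def insert_commute doubleton_eq_iff)

lemma ce_elem: "e \<in> complete_edges V \<Longrightarrow> \<exists>u v. e = {u,v} \<and> u \<in> V \<and> v \<in> V \<and> u \<noteq> v"
  by (auto simp: complete_edges_def)

lemma ce_pair: "{u,v} \<in> complete_edges V \<Longrightarrow> u \<in> V \<and> v \<in> V \<and> u \<noteq> v"
  unfolding complete_edges_def by (auto simp: doubleton_eq_iff)

lemma ce_finite: "finite V \<Longrightarrow> finite (complete_edges V)"
proof -
  assume "finite V"
  moreover have "complete_edges V \<subseteq> Pow V" by (auto simp: complete_edges_def)
  ultimately show ?thesis by (meson finite_Pow_iff finite_subset)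
qed

lemma adj_ce: "F \<subseteq> complete_edges V \<Longrightarrow> (u,v) \<in> adj F \<Longrightarrow> u \<in> V \<and> v \<in> V \<and> u \<noteq> v"
  using ce_pair by (auto simp: adj_def)

lemma connected_remove:
  assumes "connected_on S F" "{u,v} \<in> F" "(u,v) \<in> (adj (F - {{u,v}}))\<^sup>*"
  shows "connected_on S (F - {{u,v}})"
proof -
  have "adj F \<subseteq> (adj (F - {{u,v}}))\<^sup>*"
  proof
    fix x assume "x \<in> adj F"
    then obtain a b where x: "x = (a,b)" "{a,b} \<in> F" by (auto simp: adj_def)
    show "x \<in> (adj (F - {{u,v}}))\<^sup>*"
    proof (cases "{a,b} = {u,v}")
      case True
      then have "(a,b) = (u,v) \<or> (a,b) = (v,u)" by (auto simp: doubleton_eq_iff)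
      then show ?thesis using assms(3) rtr_sym x by blast
    next
      case False
      then have "(a,b) \<in> adj (F - {{u,v}})" using x by (auto simp: adj_def)
      then show ?thesis using x by auto
    qed
  qed
  hence "(adj F)\<^sup>* \<subseteq> (adj (F - {{u,v}}))\<^sup>*" by (metis rtrancl_subset_rtrancl)
  thus ?thesis using assms(1) by (auto simp: connected_on_def)
qed

lemma spanning_tree:
  assumes "finite H" "H \<subseteq> complete_edges S" "connected_on S H"
  shows "\<exists>F\<subseteq>H. is_tree_on S F"
proof -
  obtain F where F: "F \<subseteq> H \<and> connected_on S F"
    and min: "\<forall>F'. F' \<subseteq> H \<and> connected_on S F' \<longrightarrow> card F \<le> card F'"
    using ex_has_least_nat[of "\<lambda>F. F \<subseteq> H \<and> connected_on S F" H card] assms by blast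
  have finF: "finite F" using F assms(1) finite_subset by blast
  have "acyclic_graph F"
  proof (rule ccontr)
    assume "\<not> acyclic_graph F"
    then obtain u v where uv: "{u,v} \<in> F" "u\<noteq>v" "(u,v) \<in> (adj (F - {{u,v}}))\<^sup>*"
      by (auto simp: acyclic_graph_def)
    have "connected_on S (F - {{u,v}})" using connected_remove F uv by blast
    then have "card F \<le> card (F - {{u,v}})" using min F by blast
    moreover have "card (F - {{u,v}}) < card F" using finF uv(1) by (meson card_Diff1_less)
    ultimately show False by simp
  qed
  thus ?thesis using F assms by (auto simp: is_tree_on_def)
qed

definition ncomp :: "nat set \<Rightarrow> nat set set \<Rightarrow> nat" where
  "ncomp V F = card (component F ` V)"

lemma comp_mem: "w \<in> component F v \<longleftrightarrow> (v,w) \<in> (adj F)\<^sup>*"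
  by (simp add: component_def)

lemma comp_self: "v \<in> component F v"
  by (simp add: component_def)

lemma comp_eq: "(v,w) \<in> (adj F)\<^sup>* \<Longrightarrow> component F v = component F w"
proof -
  assume vw: "(v,w) \<in> (adj F)\<^sup>*"
  have wv: "(w,v) \<in> (adj F)\<^sup>*" using rtr_sym vw .
  show ?thesis unfolding component_def using rtrancl_trans[OF vw] rtrancl_trans[OF wv] by auto
qed

lemma comp_eq2: "w \<in> component F v \<Longrightarrow> component F w = component F v"
  using comp_eq[of v w F] by (simp add: comp_mem)

lemma rtr_insert_char:
  "(x,y) \<in> (adj (insert {u,v} F))\<^sup>* \<longleftrightarrow>
    (x,y) \<in> (adj F)\<^sup>* \<or> (x \<in> component F u \<union> component F v \<and> y \<in> component F u \<union> component F v)"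
  (is "?L \<longleftrightarrow> ?R")
proof
  let ?B = "component F u \<union> component F v"
  have closed: "z \<in> ?B" if "y \<in> ?B" "(y,z) \<in> adj F" for y z
  proof -
    from that(1) show ?thesis
    proof
      assume "y \<in> component F u"
      then have "(u,y) \<in> (adj F)\<^sup>*" by (simp add: comp_mem)
      then have "(u,z) \<in> (adj F)\<^sup>*" using that(2) by (rule rtrancl.rtrancl_into_rtrancl)
      then show ?thesis by (simp add: comp_mem)
    next
      assume "y \<in> component F v"
      then have "(v,y) \<in> (adj F)\<^sup>*" by (simp add: comp_mem)
      then have "(v,z) \<in> (adj F)\<^sup>*" using that(2) by (rule rtrancl.rtrancl_into_rtrancl)
      then show ?thesis by (simp add: comp_mem)
    qed
  qed
  assume ?L
  then show ?R
  proof (induction y rule: rtrancl_induct)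
    case base then show ?case by simp
  next
    case (step y z)
    have yz: "(y,z) \<in> adj F \<or> (y,z) = (u,v) \<or> (y,z) = (v,u)" using step(2) by (auto simp: adj_insert)
    from step(3) show ?case
    proof
      assume xy: "(x,y) \<in> (adj F)\<^sup>*"
      from yz show ?case
      proof (elim disjE)
        assume "(y,z) \<in> adj F"
        then have "(x,z) \<in> (adj F)\<^sup>*" using xy by (simp add: rtrancl.rtrancl_into_rtrancl)
        then show ?case by (rule disjI1)
      next
        assume yz: "(y,z) = (u,v)"
        then have "(u,x) \<in> (adj F)\<^sup>*" using xy rtr_sym by simp
        then have "x \<in> component F u" by (simp add: comp_mem)
        moreover have "z \<in> component F v" using yz by (simp add: comp_self)
        ultimately show ?case by (intro disjI2) simp
      next
        assume yz: "(y,z) = (v,u)"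
        then have "(v,x) \<in> (adj F)\<^sup>*" using xy rtr_sym by simp
        then have "x \<in> component F v" by (simp add: comp_mem)
        moreover have "z \<in> component F u" using yz by (simp add: comp_self)
        ultimately show ?case by (intro disjI2) simp
      qed
    next
      assume xy: "x \<in> ?B \<and> y \<in> ?B"
      have "z \<in> ?B" using yz
      proof (elim disjE)
        assume "(y,z) \<in> adj F" then show ?thesis using xy closed by blast
      next
        assume "(y,z) = (u,v)" then show ?thesis by (simp add: comp_self)
      next
        assume "(y,z) = (v,u)" then show ?thesis by (simp add: comp_self)
      qed
      then show ?case using xy by (intro disjI2) simp
    qed
  qed
next
  let ?A = "adj (insert {u,v} F)"
  assume R: ?R
  have sub: "(adj F)\<^sup>* \<subseteq> ?A\<^sup>*" by (rule rtr_mono) auto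
  have uv: "(u,v) \<in> ?A\<^sup>*" unfolding adj_insert by (rule r_into_rtrancl) simp
  have toU: "(a,u) \<in> ?A\<^sup>*" if "a \<in> component F u \<union> component F v" for a
  proof -
    from that show ?thesis
    proof
      assume "a \<in> component F u" then have "(u,a) \<in> (adj F)\<^sup>*" by (simp add: comp_mem)
      then have "(a,u) \<in> (adj F)\<^sup>*" by (rule rtr_sym)
      then show ?thesis using sub by blast
    next
      assume "a \<in> component F v" then have "(v,a) \<in> (adj F)\<^sup>*" by (simp add: comp_mem)
      then have "(a,v) \<in> (adj F)\<^sup>*" by (rule rtr_sym)
      then have "(a,v) \<in> ?A\<^sup>*" using sub by blast
      moreover have "(v,u) \<in> ?A\<^sup>*" using uv by (rule rtr_sym)
      ultimately show ?thesis by (rule rtrancl_trans)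
    qed
  qed
  from R show ?L
  proof
    assume "(x,y) \<in> (adj F)\<^sup>*" then show ?L using sub by blast
  next
    assume xy: "x \<in> component F u \<union> component F v \<and> y \<in> component F u \<union> component F v"
    then have "(x,u) \<in> ?A\<^sup>*" using toU by simp
    moreover have "(u,y) \<in> ?A\<^sup>*" using toU[of y] xy rtr_sym by simp
    ultimately show ?L by (rule rtrancl_trans)
  qed
qed

lemma comp_insert:
  "component (insert {u,v} F) w =
    (if w \<in> component F u \<union> component F v then component F u \<union> component F v else component F w)"
proof (cases "w \<in> component F u \<union> component F v")
  case True
  have KwB: "component F w \<subseteq> component F u \<union> component F v"
  proof (cases "w \<in> component F u")
    case True then show ?thesis using comp_eq2[of w F u] by simp
  next
    case False then have "w \<in> component F v" using \<open>w \<in> component F u \<union> component F v\<close> by simp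
    then show ?thesis using comp_eq2[of w F v] by simp
  qed
  have "y \<in> component (insert {u,v} F) w \<longleftrightarrow> y \<in> component F u \<union> component F v" for y
  proof -
    have "y \<in> component (insert {u,v} F) w \<longleftrightarrow> (w,y) \<in> (adj (insert {u,v} F))\<^sup>*" by (simp add: component_def)
    also have "\<dots> \<longleftrightarrow> (w,y) \<in> (adj F)\<^sup>* \<or> (w \<in> component F u \<union> component F v \<and> y \<in> component F u \<union> component F v)"
      by (rule rtr_insert_char)
    also have "\<dots> \<longleftrightarrow> y \<in> component F u \<union> component F v"
    proof -
      have "(w,y) \<in> (adj F)\<^sup>* \<Longrightarrow> y \<in> component F u \<union> component F v"
        using KwB by (auto simp: component_def)
      then show ?thesis using True by blast
    qed
    finally show ?thesis .
  qed
  then show ?thesis using True by auto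
next
  case False
  have "y \<in> component (insert {u,v} F) w \<longleftrightarrow> y \<in> component F w" for y
  proof -
    have "y \<in> component (insert {u,v} F) w \<longleftrightarrow> (w,y) \<in> (adj (insert {u,v} F))\<^sup>*" by (simp add: component_def)
    also have "\<dots> \<longleftrightarrow> (w,y) \<in> (adj F)\<^sup>* \<or> (w \<in> component F u \<union> component F v \<and> y \<in> component F u \<union> component F v)"
      by (rule rtr_insert_char)
    also have "\<dots> \<longleftrightarrow> (w,y) \<in> (adj F)\<^sup>*" using False by simp
    also have "\<dots> \<longleftrightarrow> y \<in> component F w" by (simp add: component_def)
    finally show ?thesis .
  qed
  then show ?thesis using False by auto
qed

lemma ncomp_insert:
  assumes fin: "finite V" and u: "u \<in> V" and v: "v \<in> V" and nc: "(u,v) \<notin> (adj F)\<^sup>*"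
  shows "ncomp V (insert {u,v} F) + 1 = ncomp V F"
proof -
  let ?K = "component F"
  let ?B = "?K u \<union> ?K v"
  have img: "component (insert {u,v} F) ` V = insert ?B (?K ` V - {?K u, ?K v})"
  proof
    show "component (insert {u,v} F) ` V \<subseteq> insert ?B (?K ` V - {?K u, ?K v})"
    proof
      fix X assume "X \<in> component (insert {u,v} F) ` V"
      then obtain w where w: "w \<in> V" "X = component (insert {u,v} F) w" by auto
      show "X \<in> insert ?B (?K ` V - {?K u, ?K v})"
      proof (cases "w \<in> ?B")
        case True then show ?thesis using w comp_insert by simp
      next
        case False
        then have "?K w \<noteq> ?K u" "?K w \<noteq> ?K v" using comp_self[of w F] by auto
        then show ?thesis using w comp_insert False by simp
      qed
    qed
    show "insert ?B (?K ` V - {?K u, ?K v}) \<subseteq> component (insert {u,v} F) ` V"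
    proof
      fix X assume X: "X \<in> insert ?B (?K ` V - {?K u, ?K v})"
      show "X \<in> component (insert {u,v} F) ` V"
      proof (cases "X = ?B")
        case True
        then have "X = component (insert {u,v} F) u" using comp_insert comp_self by simp
        then show ?thesis using u by blast
      next
        case False
        then obtain w where w: "w \<in> V" "X = ?K w" "?K w \<noteq> ?K u" "?K w \<noteq> ?K v" using X by auto
        then have "w \<notin> ?B" using comp_eq2[of w F u] comp_eq2[of w F v] by auto
        then have "X = component (insert {u,v} F) w" using w comp_insert by simp
        then show ?thesis using w by blast
      qed
    qed
  qed
  have ne: "?K u \<noteq> ?K v" using nc comp_self[of v F] comp_mem[of v F u] by auto
  have notin: "?B \<notin> ?K ` V - {?K u, ?K v}"
  proof
    assume "?B \<in> ?K ` V - {?K u, ?K v}"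
    then obtain w where w: "?B = ?K w" "?K w \<noteq> ?K u" by auto
    have "u \<in> ?K w" using w(1) comp_self[of u F] by auto
    then have "?K u = ?K w" using comp_eq2[of u F w] by simp
    then show False using w by simp
  qed
  have fin2: "finite (?K ` V)" using fin by simp
  have inn: "?K u \<in> ?K ` V" "?K v \<in> ?K ` V" using u v by auto
  have "ncomp V (insert {u,v} F) = card (?K ` V - {?K u, ?K v}) + 1"
    unfolding ncomp_def img using notin fin2 by simp
  also have "card (?K ` V - {?K u, ?K v}) = card (?K ` V) - 2"
    using inn ne fin2 by (simp add: card_Diff_subset)
  moreover have "card {?K u, ?K v} = 2" using ne by simp
  moreover have "card {?K u, ?K v} \<le> card (?K ` V)" using inn fin2 by (intro card_mono) auto
  ultimately show ?thesis unfolding ncomp_def by linarith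
qed



lemma acyclic_sub:
  assumes "acyclic_graph G" "F \<subseteq> G" shows "acyclic_graph F"
  unfolding acyclic_graph_def
proof
  assume "\<exists>u v. {u,v} \<in> F \<and> u \<noteq> v \<and> (u,v) \<in> (adj (F - {{u,v}}))\<^sup>*"
  then obtain u v where uv: "{u,v} \<in> F" "u \<noteq> v" "(u,v) \<in> (adj (F - {{u,v}}))\<^sup>*" by blast
  have "(adj (F - {{u,v}}))\<^sup>* \<subseteq> (adj (G - {{u,v}}))\<^sup>*" using assms(2) by (intro rtr_mono) auto
  then have "(u,v) \<in> (adj (G - {{u,v}}))\<^sup>*" using uv(3) by blast
  moreover have "{u,v} \<in> G" using uv(1) assms(2) by blast
  ultimately show False using assms(1) uv(2) unfolding acyclic_graph_def by blast
qed

lemma comp_empty: "component {} v = {v}"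
  by (simp add: component_def adj_def)

lemma ncomp_empty: "ncomp V {} = card V"
proof -
  have "inj_on (\<lambda>v. {v}) V" by (auto simp: inj_on_def)
  then show ?thesis unfolding ncomp_def comp_empty by (simp add: card_image)
qed

lemma acyclic_count:
  assumes fin: "finite V" and sub: "F \<subseteq> complete_edges V" and ac: "acyclic_graph F"
  shows "ncomp V F + card F = card V"
proof -
  have "finite F" using sub ce_finite[OF fin] finite_subset by blast
  from this sub ac show ?thesis
  proof (induction F rule: finite_induct)
    case empty then show ?case by (simp add: ncomp_empty)
  next
    case (insert e F)
    obtain u v where e: "e = {u,v}" "u \<in> V" "v \<in> V" "u \<noteq> v"
      using insert(4) ce_elem by blast
    have acF: "acyclic_graph F" using acyclic_sub[OF insert(5)] by blast
    have "F \<subseteq> complete_edges V" using insert(4) by blast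
    then have IH: "ncomp V F + card F = card V" using insert.IH acF by blast
    have "\<not> ((u,v) \<in> (adj (insert e F - {e}))\<^sup>*)"
    proof
      assume "(u,v) \<in> (adj (insert e F - {e}))\<^sup>*"
      then have "{u,v} \<in> insert e F \<and> u \<noteq> v \<and> (u,v) \<in> (adj (insert e F - {{u,v}}))\<^sup>*"
        using e by simp
      then show False using insert(5) unfolding acyclic_graph_def by blast
    qed
    moreover have "insert e F - {e} = F" using insert(2) by auto
    ultimately have nc: "(u,v) \<notin> (adj F)\<^sup>*" by simp
    have "ncomp V (insert e F) + 1 = ncomp V F" using ncomp_insert[OF fin e(2,3) nc] e by simp
    then show ?case using IH insert(1,2) by simp
  qed
qed

lemma tree_card:
  assumes fin: "finite V" and ne: "V \<noteq> {}" and tr: "is_tree_on V F"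
  shows "card F + 1 = card V"
proof -
  obtain v0 where v0: "v0 \<in> V" using ne by blast
  have "component F w = component F v0" if "w \<in> V" for w
  proof -
    have "connected_on V F" using tr by (simp add: is_tree_on_def)
    then have "(w,v0) \<in> (adj F)\<^sup>*" using v0 that unfolding connected_on_def by blast
    thus ?thesis by (rule comp_eq)
  qed
  hence "component F ` V = (\<lambda>_. component F v0) ` V" by (intro image_cong refl)
  also have "\<dots> = {component F v0}" using v0 by (rule image_constant)
  finally have "component F ` V = {component F v0}" .
  then have "ncomp V F = 1" by (simp add: ncomp_def)
  moreover have "ncomp V F + card F = card V"
    using tr unfolding is_tree_on_def by (intro acyclic_count[OF fin]) auto
  ultimately show ?thesis by simp
qed

definition emap :: "(nat \<Rightarrow> nat) \<Rightarrow> nat set set \<Rightarrow> nat set set" where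
  "emap f F = (\<lambda>e. f ` e) ` F"

lemma adj_emap:
  assumes "F \<subseteq> complete_edges A"
  shows "adj (emap f F) = map_prod f f ` adj F"
proof
  show "adj (emap f F) \<subseteq> map_prod f f ` adj F"
  proof
    fix x assume "x \<in> adj (emap f F)"
    then obtain a b where ab: "x = (a,b)" "{a,b} \<in> emap f F" by (auto simp: adj_def)
    then obtain e where e: "e \<in> F" "f ` e = {a,b}" by (auto simp: emap_def)
    obtain c d where cd: "e = {c,d}" using ce_elem[of e A] assms e(1) by blast
    then have "{f c, f d} = {a,b}" using e by simp
    then have "(a,b) = (f c, f d) \<or> (a,b) = (f d, f c)" by (auto simp: doubleton_eq_iff)
    moreover have cdF: "(c,d) \<in> adj F" "(d,c) \<in> adj F" using e cd by (auto simp: adj_def insert_commute)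
    ultimately show "x \<in> map_prod f f ` adj F"
    proof (elim disjE)
      assume "(a,b) = (f c, f d)"
      then have "x = map_prod f f (c,d)" using ab by simp
      then show ?thesis by (rule rev_image_eqI[OF cdF(1)])
    next
      assume "(a,b) = (f d, f c)"
      then have "x = map_prod f f (d,c)" using ab by simp
      then show ?thesis by (rule rev_image_eqI[OF cdF(2)])
    qed
  qed
  show "map_prod f f ` adj F \<subseteq> adj (emap f F)"
  proof
    fix x assume "x \<in> map_prod f f ` adj F"
    then obtain a b where ab: "(a,b) \<in> adj F" "x = (f a, f b)" by auto
    then have "{a,b} \<in> F" by (simp add: adj_def)
    then have "f ` {a,b} \<in> emap f F" unfolding emap_def by (rule imageI)
    then show "x \<in> adj (emap f F)" using ab by (simp add: adj_def)
  qed
qed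

lemma rtrancl_map_inj:
  assumes R: "R \<subseteq> A \<times> A" and inj: "inj_on f A" and x: "x \<in> A" and y: "y \<in> A"
  shows "(f x, f y) \<in> (map_prod f f ` R)\<^sup>* \<longleftrightarrow> (x,y) \<in> R\<^sup>*"
proof
  assume "(x,y) \<in> R\<^sup>*"
  then show "(f x, f y) \<in> (map_prod f f ` R)\<^sup>*"
  proof (induction y rule: rtrancl_induct)
    case base then show ?case by simp
  next
    case (step y z)
    have "(f y, f z) \<in> map_prod f f ` R" by (rule rev_image_eqI[OF step(2)]) simp
    then show ?case using step(3) by (meson rtrancl.rtrancl_into_rtrancl)
  qed
next
  assume fxy: "(f x, f y) \<in> (map_prod f f ` R)\<^sup>*"
  have "\<forall>y\<in>A. f y = b \<longrightarrow> (x,y) \<in> R\<^sup>*" if "(f x, b) \<in> (map_prod f f ` R)\<^sup>*" for b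
    using that
  proof (induction b rule: rtrancl_induct)
    case base
    show ?case
    proof (intro ballI impI)
      fix y assume "y \<in> A" "f y = f x"
      then have "y = x" using inj_onD[OF inj, of y x] x by simp
      then show "(x,y) \<in> R\<^sup>*" by simp
    qed
  next
    case (step c b)
    obtain u v where uv: "(u,v) \<in> R" "c = f u" "b = f v" using step(2) by auto
    have uA: "u \<in> A" "v \<in> A" using uv(1) R by auto
    have "(x,u) \<in> R\<^sup>*" using step(3) uA(1) uv(2) by blast
    then have xv: "(x,v) \<in> R\<^sup>*" using uv(1) by (rule rtrancl.rtrancl_into_rtrancl)
    show ?case
    proof (intro ballI impI)
      fix y assume "y \<in> A" "f y = b"
      then have "y = v" using inj_onD[OF inj, of y v] uA(2) uv(3) by simp
      then show "(x,y) \<in> R\<^sup>*" using xv by simp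
    qed
  qed
  then show "(x,y) \<in> R\<^sup>*" using y fxy by blast
qed

lemma adj_sub:
  assumes "F \<subseteq> complete_edges A" shows "adj F \<subseteq> A \<times> A"
proof
  fix x assume x: "x \<in> adj F"
  obtain a b where ab: "x = (a,b)" by (cases x)
  have "a \<in> A \<and> b \<in> A \<and> a \<noteq> b" using adj_ce[OF assms, of a b] x ab by simp
  then show "x \<in> A \<times> A" using ab by simp
qed

lemma emap_ce:
  assumes "bij_betw f A B" "F \<subseteq> complete_edges A" shows "emap f F \<subseteq> complete_edges B"
proof
  fix g assume "g \<in> emap f F"
  then obtain e where e: "e \<in> F" "g = f ` e" by (auto simp: emap_def)
  obtain a b where ab: "e = {a,b}" "a \<in> A" "b \<in> A" "a \<noteq> b"
    using ce_elem[of e A] assms(2) e(1) by blast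
  have fa: "f a \<in> B" "f b \<in> B" using bij_betw_apply[OF assms(1)] ab(2,3) by auto
  have "f a \<noteq> f b" using inj_onD[OF bij_betw_imp_inj_on[OF assms(1)] _ ab(2) ab(3)] ab(4) by blast
  moreover have "g = {f a, f b}" using e ab by simp
  ultimately show "g \<in> complete_edges B" using fa unfolding complete_edges_def by blast
qed

lemma tree_map:
  assumes bij: "bij_betw f A B" and tr: "is_tree_on A F"
  shows "is_tree_on B (emap f F)"
proof -
  have sub: "F \<subseteq> complete_edges A" using tr by (simp add: is_tree_on_def)
  have inj: "inj_on f A" using bij by (simp add: bij_betw_def)
  have fA: "f ` A = B" using bij by (simp add: bij_betw_def)
  have c1: "emap f F \<subseteq> complete_edges B" using emap_ce[OF bij sub] .
  have c2: "connected_on B (emap f F)"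
    unfolding connected_on_def
  proof (intro ballI)
    fix x y assume "x \<in> B" "y \<in> B"
    then obtain a b where ab: "a \<in> A" "b \<in> A" "x = f a" "y = f b" using fA by blast
    have "(a,b) \<in> (adj F)\<^sup>*" using tr ab unfolding is_tree_on_def connected_on_def by blast
    then show "(x,y) \<in> (adj (emap f F))\<^sup>*"
      using rtrancl_map_inj[OF adj_sub[OF sub] inj ab(1,2)] adj_emap[OF sub] ab by simp
  qed
  have c3: "acyclic_graph (emap f F)"
    unfolding acyclic_graph_def
  proof
    assume "\<exists>x y. {x, y} \<in> emap f F \<and> x \<noteq> y \<and> (x, y) \<in> (adj (emap f F - {{x, y}}))\<^sup>*"
    then obtain x y where xy: "{x, y} \<in> emap f F" "x \<noteq> y" "(x, y) \<in> (adj (emap f F - {{x, y}}))\<^sup>*"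
      by blast
    obtain e where e: "e \<in> F" "f ` e = {x,y}" using xy(1) by (auto simp: emap_def)
    obtain c d where cd: "e = {c,d}" "c \<in> A" "d \<in> A" "c \<noteq> d" using e sub ce_elem by blast
    have "{f c, f d} = {x,y}" using e cd by simp
    then have "(x = f c \<and> y = f d) \<or> (x = f d \<and> y = f c)" by (auto simp: doubleton_eq_iff)
    then obtain a b where ab: "{a,b} = e" "x = f a" "y = f b"
    proof (elim disjE)
      assume "x = f c \<and> y = f d" then show ?thesis using that[of c d] cd by simp
    next
      assume "x = f d \<and> y = f c" then show ?thesis using that[of d c] cd by (simp add: insert_commute)
    qed
    have aA: "a \<in> A" "b \<in> A" "a \<noteq> b" using ab cd xy(2) by auto
    have sub2: "F - {{a,b}} \<subseteq> complete_edges A" using sub by auto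
    have eq: "emap f F - {{x, y}} = emap f (F - {{a,b}})"
    proof
      show "emap f F - {{x, y}} \<subseteq> emap f (F - {{a, b}})"
      proof
        fix g assume g: "g \<in> emap f F - {{x, y}}"
        then obtain h where h: "h \<in> F" "g = f ` h" unfolding emap_def by auto
        have "h \<noteq> {a,b}" using g h ab by auto
        then show "g \<in> emap f (F - {{a, b}})" using h unfolding emap_def by blast
      qed
      show "emap f (F - {{a, b}}) \<subseteq> emap f F - {{x, y}}"
      proof
        fix g assume "g \<in> emap f (F - {{a, b}})"
        then obtain h where h: "h \<in> F" "h \<noteq> {a,b}" "g = f ` h" unfolding emap_def by auto
        have "h \<subseteq> A" using h sub by (auto simp: complete_edges_def)
        moreover have "{a,b} \<subseteq> A" using aA by auto
        ultimately have "f ` h \<noteq> f ` {a,b}" using h inj by (metis inj_on_image_eq_iff)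
        then show "g \<in> emap f F - {{x, y}}" using h ab unfolding emap_def by auto
      qed
    qed
    have "(f a, f b) \<in> (map_prod f f ` adj (F - {{a,b}}))\<^sup>*"
      using xy(3) ab unfolding eq adj_emap[OF sub2] by simp
    then have "(a,b) \<in> (adj (F - {{a,b}}))\<^sup>*"
      using rtrancl_map_inj[OF adj_sub[OF sub2] inj aA(1,2)] by simp
    moreover have "{a,b} \<in> F" using ab(1) e(1) by simp
    moreover have "acyclic_graph F" using tr by (simp add: is_tree_on_def)
    ultimately show False using aA(3) unfolding acyclic_graph_def by blast
  qed
  show ?thesis using c1 c2 c3 by (simp add: is_tree_on_def)
qed

lemma emap_inv:
  assumes bij: "bij_betw f A B" and sub: "F \<subseteq> complete_edges A"
  shows "emap (inv_into A f) (emap f F) = F"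
proof -
  have inj: "inj_on f A" using bij by (rule bij_betw_imp_inj_on)
  have "e \<subseteq> A" if "e \<in> F" for e using sub that by (auto simp: complete_edges_def)
  then have "inv_into A f ` f ` e = e" if "e \<in> F" for e
    using inv_into_image_cancel[OF inj] that by blast
  then show ?thesis unfolding emap_def image_image by simp
qed

lemma card_trees:
  assumes fin: "finite S" and r: "card S = r"
  shows "card {F. is_tree_on S F} = T r"
proof -
  obtain f where bij: "bij_betw f S {1..r}"
    using fin r bij_betw_iff_card[of S "{1..r}"] by auto
  let ?g = "inv_into S f"
  have bij2: "bij_betw ?g {1..r} S" using bij by (rule bij_betw_inv_into)
  have "bij_betw (emap f) {F. is_tree_on S F} {F. is_tree_on {1..r} F}"
  proof (rule bij_betw_byWitness[where f'="emap ?g"])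
    show "\<forall>a\<in>{F. is_tree_on S F}. emap ?g (emap f a) = a"
    proof
      fix a assume "a \<in> {F. is_tree_on S F}"
      then have "a \<subseteq> complete_edges S" by (simp add: is_tree_on_def)
      then show "emap ?g (emap f a) = a" by (rule emap_inv[OF bij])
    qed
    show "\<forall>a'\<in>{F. is_tree_on {1..r} F}. emap f (emap ?g a') = a'"
    proof
      fix a' assume "a' \<in> {F. is_tree_on {1..r} F}"
      then have "a' \<subseteq> complete_edges {1..r}" by (simp add: is_tree_on_def)
      then have sub1: "e \<subseteq> {1..r}" if "e \<in> a'" for e using that by (auto simp: complete_edges_def)
      have "f ` ?g ` e = e" if "e \<in> a'" for e
        using image_inv_into_cancel[OF bij_betw_imp_surj_on[OF bij] sub1[OF that]] by simp
      then have "\<forall>e\<in>a'. f ` ?g ` e = e" by blast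
      then show "emap f (emap ?g a') = a'" unfolding emap_def image_image by simp
    qed
    show "emap f ` {F. is_tree_on S F} \<subseteq> {F. is_tree_on {1..r} F}"
      using tree_map[OF bij] by blast
    show "emap ?g ` {F. is_tree_on {1..r} F} \<subseteq> {F. is_tree_on S F}"
      using tree_map[OF bij2] by blast
  qed
  then show ?thesis unfolding T_def by (rule bij_betw_same_card)
qed



definition wt :: "(nat \<Rightarrow> nat set \<Rightarrow> real) \<Rightarrow> nat \<Rightarrow> nat set set \<Rightarrow> real" where
  "wt p n G = (\<Prod>e\<in>G. p n e) * (\<Prod>e\<in>Kn_edges n - G. 1 - p n e)"

lemma Kn_finite: "finite (Kn_edges n)"
  unfolding Kn_edges_def by (rule ce_finite) simp

lemma rg_prob_sum: "rg_prob p n A = (\<Sum>G\<in>Pow (Kn_edges n). if A G then wt p n G else 0)"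
proof -
  have "{G. G \<subseteq> Kn_edges n \<and> A G} = {G \<in> Pow (Kn_edges n). A G}" by auto
  then show ?thesis unfolding rg_prob_def wt_def
    using sum.inter_filter[OF finite_Pow_iff[THEN iffD2, OF Kn_finite]] by simp
qed

lemma rg_prob_cong: "(\<And>G. G \<subseteq> Kn_edges n \<Longrightarrow> A G = B G) \<Longrightarrow> rg_prob p n A = rg_prob p n B"
  unfolding rg_prob_sum by (intro sum.cong refl) auto

lemma wt_nonneg:
  assumes "\<And>e. e \<in> Kn_edges n \<Longrightarrow> 0 \<le> p n e \<and> p n e \<le> 1" and "G \<subseteq> Kn_edges n"
  shows "0 \<le> wt p n G"
proof -
  have "0 \<le> (\<Prod>e\<in>G. p n e)" using assms by (intro prod_nonneg) blast
  moreover have "0 \<le> (\<Prod>e\<in>Kn_edges n - G. 1 - p n e)" using assms(1) by (intro prod_nonneg) auto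
  ultimately show ?thesis unfolding wt_def by simp
qed

lemma prob_fix:
  assumes F: "F \<subseteq> Kn_edges n" and D: "D \<subseteq> Kn_edges n" and FD: "F \<inter> D = {}"
  shows "rg_prob p n (\<lambda>G. F \<subseteq> G \<and> G \<inter> D = {}) = (\<Prod>e\<in>F. p n e) * (\<Prod>e\<in>D. 1 - p n e)"
proof -
  let ?E = "Kn_edges n"
  define f1 where "f1 e = (if e \<in> D then 0 else p n e)" for e
  define f2 where "f2 e = (if e \<in> F then 0 else 1 - p n e)" for e
  define h where "h e = (if e \<in> F then p n e else if e \<in> D then 1 - p n e else 1)" for e
  have fin: "finite ?E" by (rule Kn_finite)
  have eq1: "(\<Prod>e\<in>?E. f1 e + f2 e) = (\<Sum>X\<in>Pow ?E. (\<Prod>e\<in>X. f1 e) * (\<Prod>e\<in>?E-X. f2 e))"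
    by (rule prod_add[OF fin])
  have eq2: "(\<Prod>e\<in>?E. f1 e + f2 e) = (\<Prod>e\<in>?E. h e)"
    using FD by (intro prod.cong refl) (auto simp: f1_def f2_def h_def)
  have eq3: "(\<Prod>e\<in>?E. h e) = (\<Prod>e\<in>F. p n e) * (\<Prod>e\<in>D. 1 - p n e)"
  proof -
    have sub: "F \<union> D \<subseteq> ?E" using F D by blast
    have "(\<Prod>e\<in>?E. h e) = (\<Prod>e\<in>?E - (F \<union> D). h e) * (\<Prod>e\<in>F \<union> D. h e)"
      by (rule prod.subset_diff[OF sub fin])
    also have "(\<Prod>e\<in>?E - (F \<union> D). h e) = 1" by (intro prod.neutral) (auto simp: h_def)
    also have "(\<Prod>e\<in>F \<union> D. h e) = (\<Prod>e\<in>F. h e) * (\<Prod>e\<in>D. h e)"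
      using FD fin sub by (intro prod.union_disjoint) (auto intro: finite_subset)
    also have "(\<Prod>e\<in>F. h e) = (\<Prod>e\<in>F. p n e)" by (intro prod.cong refl) (simp add: h_def)
    also have "(\<Prod>e\<in>D. h e) = (\<Prod>e\<in>D. 1 - p n e)" using FD by (intro prod.cong refl) (auto simp: h_def)
    finally show ?thesis by simp
  qed
  have eqX: "(\<Prod>e\<in>X. f1 e) * (\<Prod>e\<in>?E-X. f2 e) = (if F \<subseteq> X \<and> X \<inter> D = {} then wt p n X else 0)"
    if X: "X \<in> Pow ?E" for X
  proof (cases "F \<subseteq> X \<and> X \<inter> D = {}")
    case True
    have "(\<Prod>e\<in>X. f1 e) = (\<Prod>e\<in>X. p n e)" using True by (intro prod.cong refl) (auto simp: f1_def)
    moreover have "(\<Prod>e\<in>?E-X. f2 e) = (\<Prod>e\<in>?E-X. 1 - p n e)" using True by (intro prod.cong refl) (auto simp: f2_def)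
    ultimately show ?thesis using True by (simp add: wt_def)
  next
    case False
    have finX: "finite X" using X fin by (auto intro: finite_subset)
    show ?thesis
    proof (cases "F \<subseteq> X")
      case True
      then obtain e where e: "e \<in> X" "e \<in> D" using False by blast
      have "(\<Prod>e\<in>X. f1 e) = 0" using e finX by (intro prod_zero) (auto simp: f1_def)
      then show ?thesis by (simp add: if_not_P[OF False])
    next
      case False2: False
      then obtain e where e: "e \<in> F" "e \<notin> X" by blast
      have "e \<in> ?E - X" using e F by blast
      then have "(\<Prod>e\<in>?E-X. f2 e) = 0" using e fin by (intro prod_zero) (auto simp: f2_def)
      then show ?thesis by (simp add: if_not_P[OF False])
    qed
  qed
  have "(\<Prod>e\<in>F. p n e) * (\<Prod>e\<in>D. 1 - p n e) = (\<Sum>X\<in>Pow ?E. (\<Prod>e\<in>X. f1 e) * (\<Prod>e\<in>?E-X. f2 e))"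
    using eq1 eq2 eq3 by simp
  also have "\<dots> = (\<Sum>X\<in>Pow ?E. if F \<subseteq> X \<and> X \<inter> D = {} then wt p n X else 0)"
    by (rule sum.cong[OF refl]) (rule eqX)
  finally show ?thesis unfolding rg_prob_sum by simp
qed

lemma rg_prob_le_sum:
  assumes pp: "\<And>e. e \<in> Kn_edges n \<Longrightarrow> 0 \<le> p n e \<and> p n e \<le> 1"
    and fin: "finite I" and cov: "\<And>G. G \<subseteq> Kn_edges n \<Longrightarrow> A G \<Longrightarrow> \<exists>j\<in>I. B j G"
  shows "rg_prob p n A \<le> (\<Sum>j\<in>I. rg_prob p n (B j))"
proof -
  let ?E = "Kn_edges n"
  have "rg_prob p n A = (\<Sum>G\<in>Pow ?E. if A G then wt p n G else 0)" by (rule rg_prob_sum)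
  also have "\<dots> \<le> (\<Sum>G\<in>Pow ?E. \<Sum>j\<in>I. if B j G then wt p n G else 0)"
  proof (rule sum_mono)
    fix G assume G: "G \<in> Pow ?E"
    have w0: "0 \<le> wt p n G" using wt_nonneg[of n p G, OF pp] G by blast
    have nn: "\<forall>j\<in>I. 0 \<le> (if B j G then wt p n G else 0)" using w0 by simp
    show "(if A G then wt p n G else 0) \<le> (\<Sum>j\<in>I. if B j G then wt p n G else 0)"
    proof (cases "A G")
      case True
      then obtain j where j: "j \<in> I" "B j G" using cov G by blast
      have "(if B j G then wt p n G else 0) \<le> (\<Sum>j\<in>I. if B j G then wt p n G else 0)"
        using member_le_sum[of j I "\<lambda>j. if B j G then wt p n G else 0"] j(1) fin nn by blast
      then show ?thesis using True j by simp
    next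
      case False
      have "0 \<le> (\<Sum>j\<in>I. if B j G then wt p n G else 0)" using nn by (intro sum_nonneg) blast
      then show ?thesis using False by simp
    qed
  qed
  also have "\<dots> = (\<Sum>j\<in>I. \<Sum>G\<in>Pow ?E. if B j G then wt p n G else 0)" by (rule sum.swap)
  also have "\<dots> = (\<Sum>j\<in>I. rg_prob p n (B j))" by (simp add: rg_prob_sum)
  finally show ?thesis .
qed

lemma rg_prob_ge_sum:
  assumes pp: "\<And>e. e \<in> Kn_edges n \<Longrightarrow> 0 \<le> p n e \<and> p n e \<le> 1"
    and fin: "finite I"
    and uniq: "\<And>G j k. G \<subseteq> Kn_edges n \<Longrightarrow> j \<in> I \<Longrightarrow> k \<in> I \<Longrightarrow> B j G \<Longrightarrow> B k G \<Longrightarrow> j = k"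
    and imp: "\<And>G j. G \<subseteq> Kn_edges n \<Longrightarrow> j \<in> I \<Longrightarrow> B j G \<Longrightarrow> A G"
  shows "(\<Sum>j\<in>I. rg_prob p n (B j)) \<le> rg_prob p n A"
proof -
  let ?E = "Kn_edges n"
  have "(\<Sum>j\<in>I. rg_prob p n (B j)) = (\<Sum>j\<in>I. \<Sum>G\<in>Pow ?E. if B j G then wt p n G else 0)"
    by (simp add: rg_prob_sum)
  also have "\<dots> = (\<Sum>G\<in>Pow ?E. \<Sum>j\<in>I. if B j G then wt p n G else 0)" by (rule sum.swap)
  also have "\<dots> \<le> (\<Sum>G\<in>Pow ?E. if A G then wt p n G else 0)"
  proof (rule sum_mono)
    fix G assume G: "G \<in> Pow ?E"
    show "(\<Sum>j\<in>I. if B j G then wt p n G else 0) \<le> (if A G then wt p n G else 0)"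
    proof (cases "\<exists>j\<in>I. B j G")
      case True
      then obtain j where j: "j \<in> I" "B j G" by blast
      have "(\<Sum>k\<in>I. if B k G then wt p n G else 0) = (\<Sum>k\<in>I. if k = j then wt p n G else 0)"
      proof (intro sum.cong refl)
        fix k assume k: "k \<in> I"
        show "(if B k G then wt p n G else 0) = (if k = j then wt p n G else 0)"
          using uniq[of G k j] k j G by (cases "B k G") auto
      qed
      also have "\<dots> = wt p n G" using j(1) fin by simp
      finally show ?thesis using imp[of G j] G j by simp
    next
      case False
      then have "(\<Sum>k\<in>I. if B k G then wt p n G else 0) = 0" by (intro sum.neutral) auto
      moreover have "0 \<le> wt p n G" using wt_nonneg[of n p G, OF pp] G by blast
      ultimately show ?thesis by simp
    qed
  qed
  also have "\<dots> = rg_prob p n A" by (rule rg_prob_sum[symmetric])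
  finally show ?thesis .
qed



definition bd :: "nat \<Rightarrow> nat set \<Rightarrow> nat set set" where
  "bd n S = {e \<in> Kn_edges n. \<exists>u v. e = {u,v} \<and> u \<in> S \<and> v \<notin> S}"

definition meet :: "nat \<Rightarrow> nat set \<Rightarrow> nat set set" where
  "meet n S = {e \<in> Kn_edges n. e \<inter> S \<noteq> {}}"

lemma Kn_adj_sub: "G \<subseteq> Kn_edges n \<Longrightarrow> adj G \<subseteq> {1..n} \<times> {1..n}"
  unfolding Kn_edges_def by (rule adj_sub)

lemma comp_sub:
  assumes G: "G \<subseteq> Kn_edges n" and i: "i \<in> {1..n}"
  shows "component G i \<subseteq> {1..n}"
proof
  fix x assume "x \<in> component G i"
  then have ix: "(i,x) \<in> (adj G)\<^sup>*" by (simp add: comp_mem)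
  have A: "adj G \<subseteq> {1..n} \<times> {1..n}" using G by (rule Kn_adj_sub)
  from ix show "x \<in> {1..n}"
  proof (cases rule: rtranclE)
    case base then show ?thesis using i by simp
  next
    case (step y) then show ?thesis using A by blast
  qed
qed

lemma comp_bd:
  assumes G: "G \<subseteq> Kn_edges n"
  shows "G \<inter> bd n (component G i) = {}"
proof (rule ccontr)
  assume "G \<inter> bd n (component G i) \<noteq> {}"
  then obtain e u v where e: "e \<in> G" "e = {u,v}" "u \<in> component G i" "v \<notin> component G i"
    unfolding bd_def by blast
  have uv: "(u,v) \<in> adj G" using e by (simp add: adj_def)
  have "(i,u) \<in> (adj G)\<^sup>*" using e(3) by (simp add: comp_mem)
  then have "(i,v) \<in> (adj G)\<^sup>*" using uv by (rule rtrancl.rtrancl_into_rtrancl)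
  then have "v \<in> component G i" by (simp add: comp_mem)
  then show False using e(4) by simp
qed

lemma comp_conn:
  assumes G: "G \<subseteq> Kn_edges n"
  shows "connected_on (component G i) (G \<inter> complete_edges (component G i))"
proof -
  let ?K = "component G i"
  let ?H = "G \<inter> complete_edges ?K"
  have reach: "(i,x) \<in> (adj ?H)\<^sup>*" if "(i,x) \<in> (adj G)\<^sup>*" for x
    using that
  proof (induction x rule: rtrancl_induct)
    case base then show ?case by simp
  next
    case (step y z)
    have yz: "{y,z} \<in> G" using step(2) by (simp add: adj_def)
    have yK: "y \<in> ?K" using step(1) by (simp add: comp_mem)
    have zK: "z \<in> ?K" using step(1,2) by (simp add: comp_mem rtrancl.rtrancl_into_rtrancl)
    have "{y,z} \<in> complete_edges {1..n}" using yz G unfolding Kn_edges_def by blast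
    then have "y \<noteq> z" using ce_pair by blast
    then have "{y,z} \<in> complete_edges ?K" using yK zK unfolding complete_edges_def by blast
    then have "(y,z) \<in> adj ?H" using yz by (simp add: adj_def)
    then show ?case using step(3) by (rule rtrancl.rtrancl_into_rtrancl[rotated])
  qed
  show ?thesis unfolding connected_on_def
  proof (intro ballI)
    fix x y assume x: "x \<in> ?K" and y: "y \<in> ?K"
    have "(i,x) \<in> (adj ?H)\<^sup>*" using x reach by (simp add: comp_mem)
    then have "(x,i) \<in> (adj ?H)\<^sup>*" by (rule rtr_sym)
    moreover have "(i,y) \<in> (adj ?H)\<^sup>*" using y reach by (simp add: comp_mem)
    ultimately show "(x,y) \<in> (adj ?H)\<^sup>*" by (rule rtrancl_trans)
  qed
qed

lemma comp_tree:
  assumes G: "G \<subseteq> Kn_edges n" and i: "i \<in> S"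
    and GF: "G \<inter> meet n S = F" and tr: "is_tree_on S F"
  shows "component G i = S"
proof
  show "S \<subseteq> component G i"
  proof
    fix x assume "x \<in> S"
    then have "(i,x) \<in> (adj F)\<^sup>*" using tr i unfolding is_tree_on_def connected_on_def by blast
    moreover have "F \<subseteq> G" using GF by blast
    ultimately have "(i,x) \<in> (adj G)\<^sup>*" using rtr_mono by blast
    then show "x \<in> component G i" by (simp add: comp_mem)
  qed
  show "component G i \<subseteq> S"
  proof
    fix x assume "x \<in> component G i"
    then have "(i,x) \<in> (adj G)\<^sup>*" by (simp add: comp_mem)
    then show "x \<in> S"
    proof (induction x rule: rtrancl_induct)
      case base show ?case using i .
    next
      case (step y z)
      have yz: "{y,z} \<in> G" using step(2) by (simp add: adj_def)
      have "{y,z} \<inter> S \<noteq> {}" using step(3) by blast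
      then have "{y,z} \<in> meet n S" using yz G unfolding meet_def by blast
      then have "{y,z} \<in> F" using yz GF by blast
      then have "{y,z} \<in> complete_edges S" using tr by (auto simp: is_tree_on_def)
      then show "z \<in> S" using ce_pair[of y z S] by blast
    qed
  qed
qed

lemma card_SS:
  assumes i: "i \<in> {1..n}" and r: "1 \<le> r"
  shows "card {S. S \<subseteq> {1..n} \<and> i \<in> S \<and> card S = r} = (n - 1) choose (r - 1)"
proof -
  let ?V = "{1..n}"
  have "bij_betw (\<lambda>S. S - {i}) {S. S \<subseteq> ?V \<and> i \<in> S \<and> card S = r} {B. B \<subseteq> ?V - {i} \<and> card B = r - 1}"
  proof (rule bij_betw_byWitness[where f'="insert i"])
    show "\<forall>a\<in>{S. S \<subseteq> ?V \<and> i \<in> S \<and> card S = r}. insert i (a - {i}) = a" by auto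
    show "\<forall>a'\<in>{B. B \<subseteq> ?V - {i} \<and> card B = r - 1}. insert i a' - {i} = a'" by auto
    show "(\<lambda>S. S - {i}) ` {S. S \<subseteq> ?V \<and> i \<in> S \<and> card S = r} \<subseteq> {B. B \<subseteq> ?V - {i} \<and> card B = r - 1}"
    proof
      fix B assume "B \<in> (\<lambda>S. S - {i}) ` {S. S \<subseteq> ?V \<and> i \<in> S \<and> card S = r}"
      then obtain S where S: "S \<subseteq> ?V" "i \<in> S" "card S = r" "B = S - {i}" by blast
      have "finite S" using S(1) finite_subset by blast
      then have "card B = r - 1" using S by simp
      then show "B \<in> {B. B \<subseteq> ?V - {i} \<and> card B = r - 1}" using S by blast
    qed
    show "insert i ` {B. B \<subseteq> ?V - {i} \<and> card B = r - 1} \<subseteq> {S. S \<subseteq> ?V \<and> i \<in> S \<and> card S = r}"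
    proof
      fix S assume "S \<in> insert i ` {B. B \<subseteq> ?V - {i} \<and> card B = r - 1}"
      then obtain B where B: "B \<subseteq> ?V - {i}" "card B = r - 1" "S = insert i B" by blast
      have "finite B" using B(1) finite_subset by blast
      moreover have "i \<notin> B" using B(1) by blast
      ultimately have "card S = r" using B r by simp
      then show "S \<in> {S. S \<subseteq> ?V \<and> i \<in> S \<and> card S = r}" using B i by blast
    qed
  qed
  then have "card {S. S \<subseteq> ?V \<and> i \<in> S \<and> card S = r} = card {B. B \<subseteq> ?V - {i} \<and> card B = r - 1}"
    by (rule bij_betw_same_card)
  also have "\<dots> = card (?V - {i}) choose (r - 1)" by (rule n_subsets) simp
  also have "card (?V - {i}) = n - 1" using i by simp
  finally show ?thesis .
qed

lemma card_bd:
  assumes S: "S \<subseteq> {1..n}"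
  shows "card S * (n - card S) \<le> card (bd n S)"
proof -
  let ?V = "{1..n}"
  let ?g = "\<lambda>(u,v). {u,v}::nat set"
  have inj: "inj_on ?g (S \<times> (?V - S))"
  proof (rule inj_onI)
    fix x y assume x: "x \<in> S \<times> (?V - S)" and y: "y \<in> S \<times> (?V - S)" and g: "?g x = ?g y"
    obtain a b where ab: "x = (a,b)" by (cases x)
    obtain c d where cd: "y = (c,d)" by (cases y)
    have "{a,b} = {c,d}" using g ab cd by simp
    then have "(a = c \<and> b = d) \<or> (a = d \<and> b = c)" by (auto simp: doubleton_eq_iff)
    moreover have "a \<in> S" "d \<notin> S" using x y ab cd by auto
    ultimately show "x = y" using ab cd by auto
  qed
  have img: "?g ` (S \<times> (?V - S)) \<subseteq> bd n S"
  proof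
    fix e assume "e \<in> ?g ` (S \<times> (?V - S))"
    then obtain u v where uv: "u \<in> S" "v \<in> ?V" "v \<notin> S" "e = {u,v}" by auto
    then have "u \<noteq> v" "u \<in> ?V" using S by auto
    then have "{u,v} \<in> Kn_edges n" unfolding Kn_edges_def complete_edges_def using uv(2) by blast
    then show "e \<in> bd n S" unfolding bd_def using uv by blast
  qed
  have fin: "finite (bd n S)" using Kn_finite[of n] unfolding bd_def by simp
  have finS: "finite S" using S finite_subset by blast
  have "card (S \<times> (?V - S)) = card S * (n - card S)"
    using finS S by (simp add: card_cartesian_product card_Diff_subset)
  moreover have "card (S \<times> (?V - S)) \<le> card (bd n S)" using card_inj_on_le[OF inj img fin] .
  ultimately show ?thesis by simp
qed

lemma card_meet:
  assumes S: "S \<subseteq> {1..n}"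
  shows "card (meet n S) \<le> card S * n"
proof -
  let ?V = "{1..n}"
  let ?g = "\<lambda>(u,v). {u,v}::nat set"
  have sub: "meet n S \<subseteq> ?g ` (S \<times> ?V)"
  proof
    fix e assume e: "e \<in> meet n S"
    then have "e \<in> complete_edges ?V" "e \<inter> S \<noteq> {}" unfolding meet_def Kn_edges_def by auto
    then obtain a b where ab: "e = {a,b}" "a \<in> ?V" "b \<in> ?V" "e \<inter> S \<noteq> {}" using ce_elem by blast
    show "e \<in> ?g ` (S \<times> ?V)"
    proof (cases "a \<in> S")
      case True
      then have "(a,b) \<in> S \<times> ?V" using ab by simp
      then show ?thesis using ab(1) by (intro rev_image_eqI[of "(a,b)"]) auto
    next
      case False
      then have "b \<in> S" using ab by auto
      then have "(b,a) \<in> S \<times> ?V" using ab by simp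
      then show ?thesis using ab(1) by (intro rev_image_eqI[of "(b,a)"]) auto
    qed
  qed
  have finS: "finite S" using S finite_subset by blast
  have "card (meet n S) \<le> card (?g ` (S \<times> ?V))" using sub by (intro card_mono) (auto simp: finS)
  also have "\<dots> \<le> card (S \<times> ?V)" by (rule card_image_le) (simp add: finS)
  also have "\<dots> = card S * n" by (simp add: card_cartesian_product)
  finally show ?thesis .
qed



lemma ce_mono: "S \<subseteq> V \<Longrightarrow> complete_edges S \<subseteq> complete_edges V"
  unfolding complete_edges_def by blast

lemma trees_finite: "finite S \<Longrightarrow> finite {F. is_tree_on S F}"
proof -
  assume "finite S"
  then have "finite (Pow (complete_edges S))" using ce_finite by simp
  moreover have "{F. is_tree_on S F} \<subseteq> Pow (complete_edges S)" by (auto simp: is_tree_on_def)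
  ultimately show ?thesis using finite_subset by blast
qed

lemma tree_edges_card:
  assumes "finite S" "i \<in> S" "card S = r" "is_tree_on S F"
  shows "card F = r - 1"
proof -
  have "S \<noteq> {}" using assms(2) by blast
  then have "card F + 1 = card S" by (rule tree_card[OF assms(1) _ assms(4)])
  then show ?thesis using assms(3) by simp
qed

lemma prob_bounds:
  fixes p :: "nat \<Rightarrow> nat set \<Rightarrow> real" and lo hi :: real
  assumes pp: "\<And>e. e \<in> Kn_edges n \<Longrightarrow> 0 \<le> p n e \<and> p n e \<le> 1"
    and plo: "\<And>e. e \<in> Kn_edges n \<Longrightarrow> lo \<le> p n e"
    and phi: "\<And>e. e \<in> Kn_edges n \<Longrightarrow> p n e \<le> hi"
    and lo0: "0 \<le> lo" and lohi: "lo \<le> hi" and hi1: "hi \<le> 1"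
    and i: "i \<in> {1..n}" and r: "1 \<le> r"
  shows "rg_prob p n (\<lambda>G. card (component G i) = r)
           \<le> real ((n - 1) choose (r - 1)) * T r * hi ^ (r - 1) * (1 - lo) ^ (r * (n - r))"
    and "real ((n - 1) choose (r - 1)) * T r * lo ^ (r - 1) * (1 - hi) ^ (r * n)
           \<le> rg_prob p n (\<lambda>G. card (component G i) = r)"
proof -
  let ?V = "{1..n}"
  let ?E = "Kn_edges n"
  let ?SS = "{S. S \<subseteq> ?V \<and> i \<in> S \<and> card S = r}"
  let ?I = "SIGMA S:?SS. {F. is_tree_on S F}"
  let ?P = "rg_prob p n (\<lambda>G. card (component G i) = r)"
  have finSS: "finite ?SS"
  proof -
    have "?SS \<subseteq> Pow ?V" by blast
    then show ?thesis using finite_subset by blast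
  qed
  have finS: "finite S" if "S \<in> ?SS" for S
  proof -
    have "S \<subseteq> ?V" using that by blast
    then show ?thesis using finite_subset[of S ?V] by simp
  qed
  have finI: "finite ?I"
  proof (rule finite_SigmaI[OF finSS])
    fix S assume "S \<in> ?SS" then show "finite {F. is_tree_on S F}" using finS trees_finite by blast
  qed
  have cardI: "card ?I = ((n - 1) choose (r - 1)) * T r"
  proof -
    have "card ?I = (\<Sum>S\<in>?SS. card {F. is_tree_on S F})"
    proof (rule card_SigmaI[OF finSS])
      show "\<forall>S\<in>?SS. finite {F. is_tree_on S F}" using finS trees_finite by blast
    qed
    also have "\<dots> = (\<Sum>S\<in>?SS. T r)"
    proof (rule sum.cong[OF refl])
      fix S assume S: "S \<in> ?SS"
      show "card {F. is_tree_on S F} = T r" using card_trees[OF finS[OF S]] S by blast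
    qed
    also have "\<dots> = card ?SS * T r" by simp
    also have "card ?SS = (n - 1) choose (r - 1)" using card_SS[OF i r] .
    finally show ?thesis .
  qed
  have hi0: "0 \<le> hi" using lo0 lohi by simp
  show "?P \<le> real ((n - 1) choose (r - 1)) * T r * hi ^ (r - 1) * (1 - lo) ^ (r * (n - r))"
  proof -
  have "?P \<le> (\<Sum>j\<in>?I. rg_prob p n (\<lambda>G. snd j \<subseteq> G \<and> G \<inter> bd n (fst j) = {}))"
  proof (rule rg_prob_le_sum[of n p, OF pp finI])
    fix G assume G: "G \<subseteq> ?E" and cG: "card (component G i) = r"
    let ?K = "component G i"
    have KV: "?K \<subseteq> ?V" using comp_sub[OF G i] .
    have KSS: "?K \<in> ?SS" using KV cG comp_self[of i G] by simp
    have finG: "finite G" using finite_subset[OF G Kn_finite] .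
    have finH: "finite (G \<inter> complete_edges ?K)" using finG by simp
    have "\<exists>F\<subseteq>G \<inter> complete_edges ?K. is_tree_on ?K F"
      by (rule spanning_tree[OF finH _ comp_conn[OF G, of i]]) simp
    then obtain F where F: "F \<subseteq> G" "is_tree_on ?K F" by blast
    have "(?K, F) \<in> ?I" by (rule SigmaI[OF KSS]) (simp add: F(2))
    moreover have "F \<subseteq> G \<and> G \<inter> bd n ?K = {}" using F comp_bd[OF G] by blast
    ultimately show "\<exists>j\<in>?I. snd j \<subseteq> G \<and> G \<inter> bd n (fst j) = {}" by (intro bexI[of _ "(?K,F)"]) simp_all
  qed
  also have "\<dots> \<le> (\<Sum>j\<in>?I. hi ^ (r - 1) * (1 - lo) ^ (r * (n - r)))"
  proof (rule sum_mono)
    fix j assume j: "j \<in> ?I"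
    obtain S F where SF: "j = (S,F)" by (cases j)
    have S: "S \<subseteq> ?V" "i \<in> S" "card S = r" and tr: "is_tree_on S F" using j SF by auto
    have finS': "finite S" using finite_subset[OF S(1)] by simp
    have FE: "F \<subseteq> ?E" using tr ce_mono[OF S(1)] unfolding is_tree_on_def Kn_edges_def by blast
    have bE: "bd n S \<subseteq> ?E" unfolding bd_def by blast
    have disj: "F \<inter> bd n S = {}"
    proof (rule ccontr)
      assume "F \<inter> bd n S \<noteq> {}"
      then obtain e where e: "e \<in> F" "e \<in> bd n S" by blast
      obtain a b where ab: "e = {a,b}" "a \<in> S" "b \<notin> S" using e(2) unfolding bd_def by blast
      have "e \<in> complete_edges S" using e(1) tr by (auto simp: is_tree_on_def)
      then show False using ab ce_pair[of a b S] by simp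
    qed
    have eq: "rg_prob p n (\<lambda>G. snd j \<subseteq> G \<and> G \<inter> bd n (fst j) = {})
        = (\<Prod>e\<in>F. p n e) * (\<Prod>e\<in>bd n S. 1 - p n e)"
      using prob_fix[OF FE bE disj] SF by simp
    have cF: "card F = r - 1" using tree_edges_card[OF finS' S(2,3) tr] .
    have "(\<Prod>e\<in>F. p n e) \<le> (\<Prod>e\<in>F. hi)" using FE pp phi by (intro prod_mono) blast
    also have "\<dots> = hi ^ (r - 1)" using cF by simp
    finally have A: "(\<Prod>e\<in>F. p n e) \<le> hi ^ (r - 1)" .
    have A0: "0 \<le> (\<Prod>e\<in>F. p n e)" using FE pp by (intro prod_nonneg) blast
    have "(\<Prod>e\<in>bd n S. 1 - p n e) \<le> (\<Prod>e\<in>bd n S. 1 - lo)"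
    proof (rule prod_mono)
      fix e assume "e \<in> bd n S" then have "e \<in> ?E" using bE by blast
      then show "0 \<le> 1 - p n e \<and> 1 - p n e \<le> 1 - lo" using pp[of e] plo[of e] by simp
    qed
    also have "\<dots> = (1 - lo) ^ card (bd n S)" by simp
    also have "\<dots> \<le> (1 - lo) ^ (r * (n - r))"
    proof (rule power_decreasing)
      show "r * (n - r) \<le> card (bd n S)" using card_bd[OF S(1)] S(3) by simp
      show "0 \<le> 1 - lo" using lohi hi1 by simp
      show "1 - lo \<le> 1" using lo0 by simp
    qed
    finally have B: "(\<Prod>e\<in>bd n S. 1 - p n e) \<le> (1 - lo) ^ (r * (n - r))" .
    have B0: "0 \<le> (\<Prod>e\<in>bd n S. 1 - p n e)"
    proof (rule prod_nonneg)
      fix e assume "e \<in> bd n S" then have "e \<in> ?E" using bE by blast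
      then show "0 \<le> 1 - p n e" using pp[of e] by simp
    qed
    have "(\<Prod>e\<in>F. p n e) * (\<Prod>e\<in>bd n S. 1 - p n e) \<le> hi ^ (r - 1) * (1 - lo) ^ (r * (n - r))"
      by (rule mult_mono[OF A B _ B0]) (use hi0 in simp)
    then show "rg_prob p n (\<lambda>G. snd j \<subseteq> G \<and> G \<inter> bd n (fst j) = {}) \<le> hi ^ (r - 1) * (1 - lo) ^ (r * (n - r))"
      using eq by simp
  qed
  also have "\<dots> = real (card ?I) * (hi ^ (r - 1) * (1 - lo) ^ (r * (n - r)))" by simp
  also have "\<dots> = real ((n - 1) choose (r - 1)) * T r * hi ^ (r - 1) * (1 - lo) ^ (r * (n - r))"
    using cardI by simp
  finally show ?thesis .
  qed
  show "real ((n - 1) choose (r - 1)) * T r * lo ^ (r - 1) * (1 - hi) ^ (r * n) \<le> ?P"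
  proof -
    let ?B = "\<lambda>j G. G \<inter> meet n (fst j) = snd j"
    have "real ((n - 1) choose (r - 1)) * T r * lo ^ (r - 1) * (1 - hi) ^ (r * n)
        = (\<Sum>j\<in>?I. lo ^ (r - 1) * (1 - hi) ^ (r * n))" using cardI by simp
    also have "\<dots> \<le> (\<Sum>j\<in>?I. rg_prob p n (?B j))"
    proof (rule sum_mono)
      fix j assume j: "j \<in> ?I"
      obtain S F where SF: "j = (S,F)" by (cases j)
      have S: "S \<subseteq> ?V" "i \<in> S" "card S = r" and tr: "is_tree_on S F" using j SF by auto
      have finS': "finite S" using finite_subset[OF S(1)] by simp
      have FE: "F \<subseteq> ?E" using tr ce_mono[OF S(1)] unfolding is_tree_on_def Kn_edges_def by blast
      have FM: "F \<subseteq> meet n S"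
      proof
        fix e assume e: "e \<in> F"
        then have "e \<in> complete_edges S" using tr by (auto simp: is_tree_on_def)
        then obtain a b where "e = {a,b}" "a \<in> S" using ce_elem by blast
        then have "e \<inter> S \<noteq> {}" by blast
        then show "e \<in> meet n S" using e FE unfolding meet_def by blast
      qed
      have ME: "meet n S - F \<subseteq> ?E" unfolding meet_def by blast
      have disj: "F \<inter> (meet n S - F) = {}" by blast
      have Bj: "?B j = (\<lambda>G. G \<inter> meet n S = F)" using SF by simp
      have "rg_prob p n (?B j) = rg_prob p n (\<lambda>G. F \<subseteq> G \<and> G \<inter> (meet n S - F) = {})"
        unfolding Bj
      proof (rule rg_prob_cong)
        fix G show "(G \<inter> meet n S = F) = (F \<subseteq> G \<and> G \<inter> (meet n S - F) = {})" using FM by auto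
      qed
      also have "\<dots> = (\<Prod>e\<in>F. p n e) * (\<Prod>e\<in>meet n S - F. 1 - p n e)"
        by (rule prob_fix[OF FE ME disj])
      finally have eq: "rg_prob p n (?B j) = (\<Prod>e\<in>F. p n e) * (\<Prod>e\<in>meet n S - F. 1 - p n e)" .
      have cF: "card F = r - 1" using tree_edges_card[OF finS' S(2,3) tr] .
      have "lo ^ (r - 1) = (\<Prod>e\<in>F. lo)" using cF by simp
      also have "\<dots> \<le> (\<Prod>e\<in>F. p n e)" using FE plo lo0 by (intro prod_mono) blast
      finally have A: "lo ^ (r - 1) \<le> (\<Prod>e\<in>F. p n e)" .
      have finM: "finite (meet n S)" using Kn_finite[of n] unfolding meet_def by simp
      have "card (meet n S - F) \<le> card (meet n S)" using finM by (intro card_mono) auto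
      also have "\<dots> \<le> r * n" using card_meet[OF S(1)] S(3) by simp
      finally have cM: "card (meet n S - F) \<le> r * n" .
      have "(1 - hi) ^ (r * n) \<le> (1 - hi) ^ card (meet n S - F)"
        using cM hi1 hi0 by (intro power_decreasing) auto
      also have "\<dots> = (\<Prod>e\<in>meet n S - F. 1 - hi)" by simp
      also have "\<dots> \<le> (\<Prod>e\<in>meet n S - F. 1 - p n e)"
      proof (rule prod_mono)
        fix e assume "e \<in> meet n S - F" then have "e \<in> ?E" using ME by blast
        then show "0 \<le> 1 - hi \<and> 1 - hi \<le> 1 - p n e" using phi[of e] hi1 by simp
      qed
      finally have B: "(1 - hi) ^ (r * n) \<le> (\<Prod>e\<in>meet n S - F. 1 - p n e)" .
      have "lo ^ (r - 1) * (1 - hi) ^ (r * n) \<le> (\<Prod>e\<in>F. p n e) * (\<Prod>e\<in>meet n S - F. 1 - p n e)"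
      proof (rule mult_mono[OF A B])
        have "0 \<le> lo ^ (r - 1)" using lo0 by simp
        then show "0 \<le> (\<Prod>e\<in>F. p n e)" using A by linarith
        show "0 \<le> (1 - hi) ^ (r * n)" using hi1 by simp
      qed
      then show "lo ^ (r - 1) * (1 - hi) ^ (r * n) \<le> rg_prob p n (?B j)" using eq by simp
    qed
    also have "\<dots> \<le> ?P"
    proof (rule rg_prob_ge_sum[of n p, OF pp finI])
      fix G j k assume G: "G \<subseteq> ?E" and j: "j \<in> ?I" and k: "k \<in> ?I" and Bj: "?B j G" and Bk: "?B k G"
      obtain S F where SF: "j = (S,F)" by (cases j)
      obtain S' F' where SF': "k = (S',F')" by (cases k)
      have "component G i = S" using j SF Bj by (intro comp_tree[OF G, where S=S and F=F]) auto
      moreover have "component G i = S'" using k SF' Bk by (intro comp_tree[OF G, where S=S' and F=F']) auto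
      ultimately have "S = S'" by simp
      then show "j = k" using SF SF' Bj Bk by simp
    next
      fix G j assume G: "G \<subseteq> ?E" and j: "j \<in> ?I" and Bj: "?B j G"
      obtain S F where SF: "j = (S,F)" by (cases j)
      have "component G i = S" using j SF Bj by (intro comp_tree[OF G, where S=S and F=F]) auto
      then show "card (component G i) = r" using j SF by auto
    qed
    finally show ?thesis .
  qed
qed



lemma exp_pow_ln: "C > 0 \<Longrightarrow> exp (real r * ln C) = C ^ r"
  by (simp add: exp_of_nat_mult)

lemma binom_upper:
  "real ((n - 1) choose k) * fact k \<le> real n ^ k"
proof -
  have "((n - 1) choose k) * fact k \<le> (n - 1) ^ k" by (rule binomial_fact_pow)
  also have "\<dots> \<le> n ^ k" by (intro power_mono) auto
  finally have "((n - 1) choose k) * fact k \<le> n ^ k" .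
  then have "real (((n - 1) choose k) * fact k) \<le> real (n ^ k)" by (simp only: of_nat_le_iff)
  then show ?thesis by simp
qed

lemma binom_lower:
  assumes "k < n" and "0 \<le> x" and "x \<le> real n - real k"
  shows "x ^ k \<le> real ((n - 1) choose k) * fact k"
proof -
  have "real ((n - 1) choose k) * fact k = ((real (n - 1)) gchoose k) * fact k"
    by (simp add: binomial_gbinomial)
  also have "\<dots> = (\<Prod>i = 0..<k. real (n - 1) - of_nat i)" by (rule gbinomial_mult_fact')
  finally have eq: "real ((n - 1) choose k) * fact k = (\<Prod>i = 0..<k. real (n - 1) - of_nat i)" .
  have "x ^ k = (\<Prod>i = 0..<k. x)" by simp
  also have "\<dots> \<le> (\<Prod>i = 0..<k. real (n - 1) - of_nat i)"
  proof (rule prod_mono)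
    fix i assume "i \<in> {0..<k}"
    then have "i < k" by simp
    moreover have "real (n - 1) = real n - 1" using assms(1) by (simp add: of_nat_diff)
    ultimately show "0 \<le> x \<and> x \<le> real (n - 1) - of_nat i" using assms(2,3) by simp
  qed
  finally show ?thesis using eq by simp
qed

lemma upper_an:
  fixes C \<epsilon> \<omega> a T :: real and n r :: nat
  assumes C: "C > 0" and \<epsilon>: "0 < \<epsilon>" "\<epsilon> < 1" and \<omega>: "\<omega> > 0"
    and a0: "0 \<le> a" "a \<le> C/2" and a1: "6*a*(2+C) \<le> \<omega>*C" and n4: "4*C \<le> real n"
    and r1: "1 \<le> r" and rn: "real r \<le> \<epsilon> * real n" and T: "0 \<le> T"
  shows "real ((n-1) choose (r-1)) * T * ((C+a)/n)^(r-1) * (1 - (C-a)/n)^(r*(n-r))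
     \<le> T * exp (- real r) / (C * fact (r-1)) * exp (- (delta C - C*\<epsilon> - \<omega>) * r)"
proof -
  define k where "k = r - 1"
  have rk: "r = Suc k" using r1 k_def by simp
  have npos: "real n > 0" using n4 C by linarith
  have rlen: "real r < real n" using rn \<epsilon> npos by (smt (verit) mult_less_cancel_right2)
  then have rltn: "r < n" by simp
  define B where "B = real ((n-1) choose k)"
  define lo where "lo = (C - a) / n"
  define hi where "hi = (C + a) / n"
  have B0: "0 \<le> B" by (simp add: B_def)
  have s1: "B * hi ^ k \<le> (C + a) ^ k / fact k"
  proof -
    have "B * fact k \<le> real n ^ k" unfolding B_def by (rule binom_upper)
    then have "B * fact k * hi ^ k \<le> real n ^ k * hi ^ k"
      by (rule mult_right_mono) (use C a0 npos in \<open>simp add: hi_def\<close>)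
    also have "real n ^ k * hi ^ k = (C + a) ^ k"
      using npos by (simp add: hi_def power_mult_distrib[symmetric])
    finally have "B * hi ^ k * fact k \<le> (C + a) ^ k" by (simp add: algebra_simps)
    then show ?thesis by (simp add: field_simps)
  qed
  have s2: "(C + a) ^ k \<le> C ^ k * exp (real k * (a / C))"
  proof -
    have "C + a \<le> C * exp (a / C)"
    proof -
      have "1 + a / C \<le> exp (a / C)" by (rule exp_ge_add_one_self)
      then have le: "C * (1 + a / C) \<le> C * exp (a / C)" using C by simp
      have "C * (1 + a / C) = C + a" using C by (simp add: field_simps)
      then show ?thesis using le by simp
    qed
    then have "(C + a) ^ k \<le> (C * exp (a / C)) ^ k" using C a0 by (intro power_mono) auto
    also have "\<dots> = C ^ k * exp (real k * (a / C))" by (simp only: power_mult_distrib exp_of_nat_mult)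
    finally show ?thesis .
  qed
  have s3: "(1 - lo) ^ (r * (n - r)) \<le> exp (- ((C - a) * (1 - \<epsilon>) * r))"
  proof -
    have lo0: "0 \<le> lo" using a0 C npos by (simp add: lo_def)
    have lo1: "lo \<le> 1"
    proof -
      have "C - a \<le> real n" using n4 a0 C by linarith
      then show ?thesis using npos by (simp add: lo_def)
    qed
    have "(1 - lo) ^ (r * (n - r)) \<le> exp (- lo) ^ (r * (n - r))"
    proof (rule power_mono)
      show "1 - lo \<le> exp (- lo)" using exp_ge_add_one_self[of "- lo"] by simp
      show "0 \<le> 1 - lo" using lo1 by simp
    qed
    also have "\<dots> = exp (- (lo * real (r * (n - r))))"
      by (simp add: exp_of_nat_mult[symmetric] mult.commute)
    also have "\<dots> \<le> exp (- ((C - a) * (1 - \<epsilon>) * r))"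
    proof -
      have rr: "real (r * (n - r)) = real r * (real n - real r)" using rltn by (simp add: of_nat_diff)
      have "(1 - \<epsilon>) * real n \<le> real n - real r" using rn by (simp add: algebra_simps)
      then have "(1 - \<epsilon>) \<le> (real n - real r) / real n" using npos by (simp add: field_simps)
      moreover have "0 \<le> (C - a) * real r" using a0 C by simp
      ultimately have "(C - a) * real r * (1 - \<epsilon>) \<le> (C - a) * real r * ((real n - real r) / real n)"
        by (rule mult_left_mono)
      also have "\<dots> = lo * real (r * (n - r))" unfolding rr lo_def using npos by (simp add: field_simps)
      finally show ?thesis by (simp add: algebra_simps)
    qed
    finally show ?thesis .
  qed
  have rhs: "T * exp (- real r) / (C * fact k) * exp (- (delta C - C*\<epsilon> - \<omega>) * r)
      = T / fact k * (C ^ k * exp (- C * r + C * \<epsilon> * r + \<omega> * r))"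
  proof -
    have e1: "- real r + (- (delta C - C*\<epsilon> - \<omega>) * r) = real r * ln C + (- C * r + C * \<epsilon> * r + \<omega> * r)"
      unfolding delta_def by (simp add: algebra_simps)
    have "exp (- real r) * exp (- (delta C - C*\<epsilon> - \<omega>) * r) = exp (real r * ln C) * exp (- C * r + C * \<epsilon> * r + \<omega> * r)"
      using e1 by (metis exp_add)
    also have "exp (real r * ln C) = C * C ^ k" using exp_pow_ln[OF C, of r] rk by simp
    finally have "exp (- real r) * exp (- (delta C - C*\<epsilon> - \<omega>) * r) = C * C ^ k * exp (- C * r + C * \<epsilon> * r + \<omega> * r)" .
    then show ?thesis using C by (simp add: field_simps)
  qed
  have ex: "real k * (a / C) - (C - a) * (1 - \<epsilon>) * r \<le> - C * r + C * \<epsilon> * r + \<omega> * r"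
  proof -
    have aC: "0 \<le> a * C" using a0 C by simp
    have "a + a * C \<le> 6*a*(2+C)" using a0 aC by (simp add: algebra_simps)
    then have "a + a * C \<le> \<omega> * C" using a1 by linarith
    then have aw: "a / C + a \<le> \<omega>" using C by (simp add: field_simps)
    have "real k \<le> real r" using rk by simp
    then have "real k * (a / C) \<le> real r * (a / C)" using a0 C by (intro mult_right_mono) auto
    moreover have "a * \<epsilon> * r \<ge> 0" using a0 \<epsilon> by simp
    moreover have "real r * (a / C + a) \<le> real r * \<omega>" using aw by (intro mult_left_mono) auto
    ultimately show ?thesis by (simp add: algebra_simps)
  qed
  have ee: "exp (real k * (a / C)) * exp (- ((C - a) * (1 - \<epsilon>) * r)) = exp (real k * (a / C) - (C - a) * (1 - \<epsilon>) * r)"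
    by (metis exp_add diff_conv_add_uminus)
  have "B * T * hi ^ k * (1 - lo) ^ (r * (n - r)) = T * (B * hi ^ k) * (1 - lo) ^ (r * (n - r))"
    by (simp add: algebra_simps)
  also have "\<dots> \<le> T * ((C + a) ^ k / fact k) * exp (- ((C - a) * (1 - \<epsilon>) * r))"
  proof (rule mult_mono)
    show "T * (B * hi ^ k) \<le> T * ((C + a) ^ k / fact k)" using s1 T by (rule mult_left_mono)
    show "(1 - lo) ^ (r * (n - r)) \<le> exp (- ((C - a) * (1 - \<epsilon>) * r))" by (rule s3)
    show "0 \<le> T * ((C + a) ^ k / fact k)" using T C a0 by simp
    show "0 \<le> (1 - lo) ^ (r * (n - r))"
    proof -
      have "C - a \<le> real n" using n4 a0 C by linarith
      then have "lo \<le> 1" using npos by (simp add: lo_def)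
      then show ?thesis by simp
    qed
  qed
  also have "\<dots> \<le> T * (C ^ k * exp (real k * (a / C)) / fact k) * exp (- ((C - a) * (1 - \<epsilon>) * r))"
    using s2 T by (intro mult_right_mono mult_left_mono divide_right_mono) auto
  also have "\<dots> = T / fact k * (C ^ k * (exp (real k * (a / C)) * exp (- ((C - a) * (1 - \<epsilon>) * r))))"
    by (simp add: ac_simps)
  also have "\<dots> = T / fact k * (C ^ k * exp (real k * (a / C) - (C - a) * (1 - \<epsilon>) * r))"
    using ee by simp
  also have "\<dots> \<le> T / fact k * (C ^ k * exp (- C * r + C * \<epsilon> * r + \<omega> * r))"
    using ex T C by (intro mult_left_mono) auto
  also have "\<dots> = T * exp (- real r) / (C * fact k) * exp (- (delta C - C*\<epsilon> - \<omega>) * r)"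
    using rhs by simp
  finally show ?thesis unfolding B_def lo_def hi_def k_def .
qed



lemma one_minus_ge_exp:
  fixes x :: real assumes "0 \<le> x" "x \<le> 1/2"
  shows "exp (- x - 2 * x^2) \<le> 1 - x"
proof -
  have "- x - 2 * x^2 \<le> ln (1 - x)" using ln_one_minus_pos_lower_bound[OF assms] .
  then have "exp (- x - 2 * x^2) \<le> exp (ln (1 - x))" by simp
  also have "\<dots> = 1 - x" using assms by simp
  finally show ?thesis .
qed

lemma lower_an:
  fixes C \<epsilon> \<omega> a T :: real and n r :: nat
  assumes C: "C > 0" and \<epsilon>: "0 < \<epsilon>" "\<epsilon> < 1" and \<omega>: "\<omega> > 0"
    and a0: "0 \<le> a" "a \<le> C/2" and a1: "6*a*(2+C) \<le> \<omega>*C" and n4: "4*C \<le> real n"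
    and n48: "48 * C^2 \<le> \<omega> * real n"
    and r1: "1 \<le> r" and rn: "real r \<le> \<epsilon> * real n" and T: "0 \<le> T"
  shows "1 / (C * (1 - \<epsilon>)) * (T * exp (- real r) / fact (r - 1))
          * exp (- (delta C - ln (1 - \<epsilon>) + \<omega>) * r) * exp (- 2 * \<epsilon> + 2 * \<omega> / 3)
     \<le> real ((n-1) choose (r-1)) * T * ((C-a)/n)^(r-1) * (1 - (C+a)/n)^(r*n)"
proof -
  define k where "k = r - 1"
  have rk: "r = Suc k" using r1 k_def by simp
  have npos: "real n > 0" using n4 C by linarith
  have rlen: "real r < real n" using rn \<epsilon> npos by (smt (verit) mult_less_cancel_right2)
  then have rltn: "r < n" by simp
  define B where "B = real ((n-1) choose k)"
  define lo where "lo = (C - a) / n"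
  define hi where "hi = (C + a) / n"
  have lo0: "0 \<le> lo" using a0 C npos by (simp add: lo_def)
  have hi0: "0 \<le> hi" using a0 C npos by (simp add: hi_def)
  have hi12: "hi \<le> 1/2"
  proof -
    have "2 * (C + a) = 2 * C + 2 * a" by simp
    then have "2 * (C + a) \<le> real n" using n4 a0 C by linarith
    then show ?thesis using npos by (simp add: hi_def field_simps)
  qed
  have L1: "((1 - \<epsilon>) * real n) ^ k \<le> B * fact k"
    unfolding B_def
  proof (rule binom_lower)
    show "k < n" using rltn rk by simp
    show "0 \<le> (1 - \<epsilon>) * real n" using \<epsilon> npos by simp
    show "(1 - \<epsilon>) * real n \<le> real n - real k" using rn rk by (simp add: algebra_simps)
  qed
  have L12: "(1 - \<epsilon>) ^ k * (C - a) ^ k \<le> B * fact k * lo ^ k"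
  proof -
    have "((1 - \<epsilon>) * real n) ^ k * lo ^ k \<le> B * fact k * lo ^ k"
      using L1 lo0 by (intro mult_right_mono) auto
    moreover have "((1 - \<epsilon>) * real n) ^ k * lo ^ k = (1 - \<epsilon>) ^ k * (C - a) ^ k"
    proof -
      have "((1 - \<epsilon>) * real n) ^ k * lo ^ k = ((1 - \<epsilon>) * (real n * lo)) ^ k"
        by (simp add: power_mult_distrib)
      also have "real n * lo = C - a" using npos by (simp add: lo_def)
      finally show ?thesis by (simp add: power_mult_distrib)
    qed
    ultimately show ?thesis by simp
  qed
  have L3: "C ^ k * exp (real k * (- 2 * (a / C))) \<le> (C - a) ^ k"
  proof -
    have x0: "0 \<le> a / C" using a0 C by simp
    have x1: "a / C \<le> 1/2" using a0 C by (simp add: field_simps)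
    have "exp (- (a / C) - 2 * (a / C)^2) \<le> 1 - a / C" by (rule one_minus_ge_exp[OF x0 x1])
    moreover have "- 2 * (a / C) \<le> - (a / C) - 2 * (a / C)^2"
    proof -
      have "(a/C)*(a/C) \<le> (a/C)*(1/2)" using mult_left_mono[OF x1 x0] .
      then have "(a / C)^2 \<le> (a / C) * (1/2)" unfolding power2_eq_square .
      then show ?thesis by simp
    qed
    ultimately have "exp (- 2 * (a / C)) \<le> 1 - a / C" by (meson exp_le_cancel_iff order_trans)
    then have "C * exp (- 2 * (a / C)) \<le> C * (1 - a / C)" using C by simp
    also have "C * (1 - a / C) = C - a" using C by (simp add: field_simps)
    finally have base: "C * exp (- 2 * (a / C)) \<le> C - a" .
    have "(C * exp (- 2 * (a / C))) ^ k \<le> (C - a) ^ k" using base C by (intro power_mono) auto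
    moreover have "(C * exp (- 2 * (a / C))) ^ k = C ^ k * exp (real k * (- 2 * (a / C)))"
      by (simp only: power_mult_distrib exp_of_nat_mult)
    ultimately show ?thesis by simp
  qed
  have L4: "exp (- ((C + a) * r + 2 * (C + a)^2 * r / n)) \<le> (1 - hi) ^ (r * n)"
  proof -
    have "exp (- hi - 2 * hi^2) \<le> 1 - hi" by (rule one_minus_ge_exp[OF hi0 hi12])
    then have "exp (- hi - 2 * hi^2) ^ (r * n) \<le> (1 - hi) ^ (r * n)" by (intro power_mono) auto
    moreover have "exp (- hi - 2 * hi^2) ^ (r * n) = exp (real (r * n) * (- hi - 2 * hi^2))"
      by (simp only: exp_of_nat_mult)
    moreover have "real (r * n) * (- hi - 2 * hi^2) = - ((C + a) * r + 2 * (C + a)^2 * r / n)"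
      using npos by (simp add: hi_def power2_eq_square field_simps)
    ultimately show ?thesis by simp
  qed
  have lhs: "1 / (C * (1 - \<epsilon>)) * (T * exp (- real r) / fact k)
          * exp (- (delta C - ln (1 - \<epsilon>) + \<omega>) * r) * exp (- 2 * \<epsilon> + 2 * \<omega> / 3)
      = T / fact k * ((1 - \<epsilon>) ^ k * C ^ k * exp (- C * r - \<omega> * r - 2 * \<epsilon> + 2 * \<omega> / 3))"
  proof -
    have e1: "- real r + (- (delta C - ln (1 - \<epsilon>) + \<omega>) * r) + (- 2 * \<epsilon> + 2 * \<omega> / 3)
        = real r * ln C + (real r * ln (1 - \<epsilon>) + (- C * r - \<omega> * r - 2 * \<epsilon> + 2 * \<omega> / 3))"
      unfolding delta_def by (simp add: algebra_simps)
    have "exp (- real r) * exp (- (delta C - ln (1 - \<epsilon>) + \<omega>) * r) * exp (- 2 * \<epsilon> + 2 * \<omega> / 3)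
        = exp (real r * ln C) * (exp (real r * ln (1 - \<epsilon>)) * exp (- C * r - \<omega> * r - 2 * \<epsilon> + 2 * \<omega> / 3))"
      using e1 by (metis exp_add)
    also have "exp (real r * ln C) = C * C ^ k" using exp_pow_ln[OF C, of r] rk by simp
    also have "exp (real r * ln (1 - \<epsilon>)) = (1 - \<epsilon>) * (1 - \<epsilon>) ^ k"
      using exp_pow_ln[of "1 - \<epsilon>" r] rk \<epsilon> by simp
    finally have E: "exp (- real r) * exp (- (delta C - ln (1 - \<epsilon>) + \<omega>) * r) * exp (- 2 * \<epsilon> + 2 * \<omega> / 3)
        = C * C ^ k * ((1 - \<epsilon>) * (1 - \<epsilon>) ^ k * exp (- C * r - \<omega> * r - 2 * \<epsilon> + 2 * \<omega> / 3))" .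
    have "1 / (C * (1 - \<epsilon>)) * (T * exp (- real r) / fact k)
          * exp (- (delta C - ln (1 - \<epsilon>) + \<omega>) * r) * exp (- 2 * \<epsilon> + 2 * \<omega> / 3)
        = T / fact k / (C * (1 - \<epsilon>)) * (exp (- real r) * exp (- (delta C - ln (1 - \<epsilon>) + \<omega>) * r) * exp (- 2 * \<epsilon> + 2 * \<omega> / 3))"
      by (simp add: field_simps)
    also have "\<dots> = T / fact k / (C * (1 - \<epsilon>)) * (C * C ^ k * ((1 - \<epsilon>) * (1 - \<epsilon>) ^ k * exp (- C * r - \<omega> * r - 2 * \<epsilon> + 2 * \<omega> / 3)))"
      using E by simp
    also have "\<dots> = T / fact k * ((1 - \<epsilon>) ^ k * C ^ k * exp (- C * r - \<omega> * r - 2 * \<epsilon> + 2 * \<omega> / 3))"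
      using C \<epsilon> by (simp add: field_simps)
    finally show ?thesis .
  qed
  have ex: "- C * r - \<omega> * r - 2 * \<epsilon> + 2 * \<omega> / 3 \<le> real k * (- 2 * (a / C)) + (- ((C + a) * r + 2 * (C + a)^2 * r / n))"
  proof -
    have aC: "0 \<le> a * C" using a0 C by simp
    have "2 * a + a * C \<le> \<omega> * C / 6" using a1 a0 aC by (simp add: algebra_simps)
    then have aw: "2 * (a / C) + a \<le> \<omega> / 6" using C by (simp add: field_simps)
    have "(C + a)^2 \<le> (3/2 * C)^2" using a0 C by (intro power_mono) auto
    then have "2 * (C + a)^2 \<le> 9/2 * C^2" by (simp add: power2_eq_square)
    also have "9/2 * C^2 \<le> \<omega> * real n / 6"
    proof -
      have "0 \<le> C^2" by simp
      then show ?thesis using n48 by linarith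
    qed
    finally have "2 * (C + a)^2 / real n \<le> \<omega> / 6" using npos by (simp add: field_simps)
    then have t3: "2 * (C + a)^2 * r / real n \<le> \<omega> / 6 * r"
      using mult_right_mono[of "2 * (C + a)^2 / real n" "\<omega>/6" "real r"] by simp
    have "real k \<le> real r" using rk by simp
    then have t1: "real k * (2 * (a / C)) \<le> real r * (2 * (a / C))" using a0 C by (intro mult_right_mono) auto
    have t2: "real r * (2 * (a / C) + a) \<le> real r * (\<omega> / 6)" using aw by (intro mult_left_mono) auto
    have g0: "real r * (2 * (a / C) + a) = 2 * (real r * (a / C)) + a * real r" by (simp add: algebra_simps)
    have g0': "real r * (\<omega> / 6) = \<omega> / 6 * real r" by simp
    have g0'': "real k * (2 * (a / C)) = 2 * (real k * (a / C))" "real r * (2 * (a / C)) = 2 * (real r * (a / C))" by simp_all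
    have t4: "2 * \<omega> / 3 \<le> 2 * \<omega> / 3 * real r" using \<omega> r1 by simp
    have g1: "real k * (- 2 * (a / C)) = - (2 * (real k * (a / C)))" by simp
    have g2: "(C + a) * real r = C * real r + a * real r" by (simp add: algebra_simps)
    have g3: "- C * real r = - (C * real r)" "- \<omega> * real r = - (\<omega> * real r)" by simp_all
    have g4: "2 * \<omega> / 3 * real r = 2/3 * (\<omega> * real r)" "\<omega> / 6 * real r = 1/6 * (\<omega> * real r)" by simp_all
    show ?thesis using t1 t2 t3 t4 g0 g0' g0'' g1 g2 g3 g4 \<epsilon> by linarith
  qed
  have "1 / (C * (1 - \<epsilon>)) * (T * exp (- real r) / fact k)
          * exp (- (delta C - ln (1 - \<epsilon>) + \<omega>) * r) * exp (- 2 * \<epsilon> + 2 * \<omega> / 3)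
      = T / fact k * ((1 - \<epsilon>) ^ k * C ^ k * exp (- C * r - \<omega> * r - 2 * \<epsilon> + 2 * \<omega> / 3))" by (rule lhs)
  also have "\<dots> \<le> T / fact k * ((1 - \<epsilon>) ^ k * C ^ k *
       exp (real k * (- 2 * (a / C)) + (- ((C + a) * r + 2 * (C + a)^2 * r / n))))"
    using ex T \<epsilon> C by (intro mult_left_mono) auto
  also have "\<dots> = T / fact k * ((1 - \<epsilon>) ^ k * (C ^ k * exp (real k * (- 2 * (a / C))))
       * exp (- ((C + a) * r + 2 * (C + a)^2 * r / n)))"
    by (simp only: exp_add mult.assoc)
  also have "\<dots> \<le> T / fact k * ((1 - \<epsilon>) ^ k * (C - a) ^ k * (1 - hi) ^ (r * n))"
  proof (intro mult_left_mono mult_mono)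
    show "C ^ k * exp (real k * (- 2 * (a / C))) \<le> (C - a) ^ k" by (rule L3)
    show "exp (- ((C + a) * r + 2 * (C + a)^2 * r / n)) \<le> (1 - hi) ^ (r * n)" by (rule L4)
  qed (use T \<epsilon> C a0 in auto)
  also have "\<dots> \<le> T / fact k * (B * fact k * lo ^ k * (1 - hi) ^ (r * n))"
    using L12 T hi12 by (intro mult_left_mono mult_right_mono) auto
  also have "\<dots> = B * T * lo ^ k * (1 - hi) ^ (r * n)" by simp
  finally show ?thesis unfolding B_def lo_def hi_def k_def .
qed



theorem lemma1:
  fixes C \<epsilon> \<omega> :: real and \<alpha> :: "nat \<Rightarrow> real" and p :: "nat \<Rightarrow> nat set \<Rightarrow> real"
  assumes C_pos: "C > 0" and C_ne: "C \<noteq> 1"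
    and \<alpha>_nonneg: "\<And>n. \<alpha> n \<ge> 0" and \<alpha>_lim: "\<alpha> \<longlonglongrightarrow> 0"
    and p_prob: "\<And>n e. e \<in> Kn_edges n \<Longrightarrow> 0 \<le> p n e \<and> p n e \<le> 1"
    and p_low: "\<And>n e. n \<ge> 1 \<Longrightarrow> e \<in> Kn_edges n \<Longrightarrow> (C - \<alpha> n) / n \<le> p n e"
    and p_up: "\<And>n e. n \<ge> 1 \<Longrightarrow> e \<in> Kn_edges n \<Longrightarrow> p n e \<le> (C + \<alpha> n) / n"
    and \<epsilon>: "0 < \<epsilon>" "\<epsilon> < 1" and \<omega>: "\<omega> > 0"
    and \<delta>0: "delta C - C * \<epsilon> - \<omega> > 0"
  shows "\<exists>N>0. \<forall>n::nat. real n \<ge> N \<longrightarrow> (\<forall>i\<in>{1..n}. \<forall>r::nat. 1 \<le> r \<and> real r \<le> \<epsilon> * n \<longrightarrow>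
     rg_prob p n (\<lambda>G. card (component G i) = r)
        \<le> T r * exp (- real r) / (C * fact (r - 1)) * exp (- (delta C - C * \<epsilon> - \<omega>) * r)
   \<and> rg_prob p n (\<lambda>G. card (component G i) = r)
        \<ge> 1 / (C * (1 - \<epsilon>)) * (T r * exp (- real r) / fact (r - 1))
          * exp (- (delta C - ln (1 - \<epsilon>) + \<omega>) * r) * exp (- 2 * \<epsilon> + 2 * \<omega> / 3))"
proof -
  define a0 where "a0 = min (C / 2) (\<omega> * C / (6 * (2 + C)))"
  have a0pos: "a0 > 0" using C_pos \<omega> by (simp add: a0_def)
  obtain N0 where N0: "\<And>n. n \<ge> N0 \<Longrightarrow> norm (\<alpha> n - 0) < a0"
    using \<alpha>_lim a0pos unfolding LIMSEQ_iff by blast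
  define N where "N = max (max (real N0) (4 * C)) (max (48 * C^2 / \<omega>) 1)"
  have Npos: "N > 0" by (simp add: N_def)
  show ?thesis
  proof (intro exI[of _ N] conjI allI impI ballI)
    show "N > 0" by (rule Npos)
    fix n :: nat and i r :: nat
    assume nN: "N \<le> real n" and i: "i \<in> {1..n}" and rr: "1 \<le> r \<and> real r \<le> \<epsilon> * real n"
    have r1: "1 \<le> r" and rn: "real r \<le> \<epsilon> * real n" using rr by auto
    have "real N0 \<le> real n" using nN by (simp add: N_def)
    then have nN0: "N0 \<le> n" by simp
    have n4: "4 * C \<le> real n" using nN by (simp add: N_def)
    have n1r: "1 \<le> real n" using nN by (simp add: N_def)
    then have n1: "1 \<le> n" by simp
    have npos: "real n > 0" using n1r by simp
    have "48 * C^2 / \<omega> \<le> real n" using nN by (simp add: N_def)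
    then have n48: "48 * C^2 \<le> \<omega> * real n" using \<omega> by (simp add: field_simps)
    define a where "a = \<alpha> n"
    have a0: "0 \<le> a" using \<alpha>_nonneg by (simp add: a_def)
    have aa0: "a < a0" using N0[OF nN0] a0 by (simp add: a_def)
    have a2: "a \<le> C / 2" using aa0 by (simp add: a0_def)
    have "a \<le> \<omega> * C / (6 * (2 + C))" using aa0 by (simp add: a0_def)
    then have a1: "6 * a * (2 + C) \<le> \<omega> * C" using C_pos by (simp add: field_simps)
    define lo where "lo = (C - a) / n"
    define hi where "hi = (C + a) / n"
    have plo: "\<And>e. e \<in> Kn_edges n \<Longrightarrow> lo \<le> p n e" using p_low[OF n1] by (simp add: lo_def a_def)
    have phi: "\<And>e. e \<in> Kn_edges n \<Longrightarrow> p n e \<le> hi" using p_up[OF n1] by (simp add: hi_def a_def)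
    have lo0: "0 \<le> lo" using a0 a2 C_pos npos by (simp add: lo_def)
    have lohi: "lo \<le> hi" using a0 npos by (simp add: lo_def hi_def divide_right_mono)
    have hi1: "hi \<le> 1"
    proof -
      have "C + a \<le> real n" using n4 a2 C_pos by linarith
      then show ?thesis using npos by (simp add: hi_def)
    qed
    note PB = prob_bounds[of n p lo hi, OF p_prob plo phi lo0 lohi hi1 i r1]
    have U: "real ((n-1) choose (r-1)) * real (T r) * ((C+a)/n)^(r-1) * (1 - (C-a)/n)^(r*(n-r))
       \<le> real (T r) * exp (- real r) / (C * fact (r-1)) * exp (- (delta C - C*\<epsilon> - \<omega>) * r)"
      by (rule upper_an[OF C_pos \<epsilon> \<omega> a0 a2 a1 n4 r1 rn]) simp
    have L: "1 / (C * (1 - \<epsilon>)) * (real (T r) * exp (- real r) / fact (r - 1))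
          * exp (- (delta C - ln (1 - \<epsilon>) + \<omega>) * r) * exp (- 2 * \<epsilon> + 2 * \<omega> / 3)
     \<le> real ((n-1) choose (r-1)) * real (T r) * ((C-a)/n)^(r-1) * (1 - (C+a)/n)^(r*n)"
      by (rule lower_an[OF C_pos \<epsilon> \<omega> a0 a2 a1 n4 n48 r1 rn]) simp
    show "rg_prob p n (\<lambda>G. card (component G i) = r)
        \<le> T r * exp (- real r) / (C * fact (r - 1)) * exp (- (delta C - C * \<epsilon> - \<omega>) * r)"
      using PB(1) U unfolding lo_def hi_def by linarith
    show "rg_prob p n (\<lambda>G. card (component G i) = r)
        \<ge> 1 / (C * (1 - \<epsilon>)) * (T r * exp (- real r) / fact (r - 1))
          * exp (- (delta C - ln (1 - \<epsilon>) + \<omega>) * r) * exp (- 2 * \<epsilon> + 2 * \<omega> / 3)"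
      using PB(2) L unfolding lo_def hi_def by linarith
  qed
qed

end
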